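(* Let $g>0$, let $\gamma:\mathbb{R}\to[0,\infty)$, $s\mapsto\gamma_s$, be smooth, and for $s\in\mathbb{R}$ let $$H_s=\frac12\begin{pmatrix} s& g\\ g& -s\end{pmatrix}=e_s(P_s^+-P_s^-),\qquad e_s=\tfrac12\sqrt{s^2+g^2},$$ where $P_s^\pm$ are the eigenprojections of $H_s$ for the eigenvalues $\pm e_s$. Let $\mathcal{L}_s\rho=-i[H_s,\rho]-\frac{\gamma_s}{2}[\sqrt{H_s},[\sqrt{H_s},\rho]]$ with $\sqrt{H_s}:=\operatorname{sgn}(H_s)\sqrt{|H_s|}$, and set $$E_s=\frac{1}{4e_s}\begin{pmatrix} g& -s-2e_s\\ -s+2e_s& -g\end{pmatrix}.$$ Then for every $\epsilon>0$ and $s'\in\mathbb{R}$ the equation $\epsilon\,\frac{d}{ds}\rho(s)=\mathcal{L}_s\rho(s)$, $s\geq s'$, admits solutions of the form $$\rho^\pm(s)=P_s^\pm+\epsilon\,a^\pm_{s,s'}+\epsilon^2 r^\pm(s,s'),$$ $$a^\pm_{s,s'}=\pm\frac{g\big((i-\gamma_s)E_s+\big((i-\gamma_s)E_s\big)^*\big)}{16(1+\gamma_s^2)e_s^3}\pm\frac{g^2(P_s^--P_s^+)}{64}\int_{s'}^s\frac{\gamma_\tau}{(1+\gamma_\tau^2)e_\tau^5}\,d\tau,$$ where $r^\pm(s,s')$ is bounded uniformly in $\epsilon$ for $s,s'$ in bounded sets. Moreover, if $\gamma_s$, $\dot\gamma_s$ and $\ddot\gamma_s$ are bounded continuous functions,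 then $r^\pm(s,s')$ is bounded uniformly in $\epsilon$ and in $s\geq s'$.
   Context: All operators act on $\mathbb{C}^2$; norms on $2\times 2$ matrices may be taken as the trace norm. Dots denote derivatives with respect to $s$. $(\cdot)^*$ denotes the adjoint. *)

theory Defs
  imports "HOL-Analysis.Analysis"
begin

text \<open>2x2 complex matrices are modelled as complex^2^2 (norm: Frobenius norm,
equivalent to the trace norm on this finite-dimensional space).\<close>

type_synonym cmat = "complex^2^2"

definition mat2 :: "complex \<Rightarrow> complex \<Rightarrow> complex \<Rightarrow> complex \<Rightarrow> cmat" where
  "mat2 a b c d = (\<chi> i j. if i = 1 then (if j = 1 then a else b) else (if j = 1 then c else d))"

definition cscale :: "complex \<Rightarrow> cmat \<Rightarrow> cmat" where
  "cscale c A = (\<chi> i j. c * A$i$j)"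

definition adjoint :: "cmat \<Rightarrow> cmat" where
  "adjoint A = (\<chi> i j. cnj (A$j$i))"

definition comm :: "cmat \<Rightarrow> cmat \<Rightarrow> cmat" where
  "comm A B = A ** B - B ** A"

definition smooth_fun :: "(real \<Rightarrow> real) \<Rightarrow> bool" where
  "smooth_fun f \<longleftrightarrow> (\<forall>n x. ((deriv ^^ n) f) differentiable (at x))"

definition Hs :: "real \<Rightarrow> real \<Rightarrow> cmat" where
  "Hs g s = cscale (1/2) (mat2 (of_real s) (of_real g) (of_real g) (- of_real s))"

definition es :: "real \<Rightarrow> real \<Rightarrow> real" where
  "es g s = sqrt (s\<^sup>2 + g\<^sup>2) / 2"

text \<open>Eigenprojection P_s^sigma of H_s for the eigenvalue sigma * e_s (sigma = 1 or -1);
 since H_s has the two simple eigenvalues +-e_s, this is the spectral projection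
 (1/2)(I + sigma H_s / e_s), i.e. P^+ = (H + e I)/(2e), P^- = (e I - H)/(2e).\<close>
definition Ps :: "real \<Rightarrow> real \<Rightarrow> real \<Rightarrow> cmat" where
  "Ps g \<sigma> s = cscale (1/2) (mat 1 + cscale (of_real (\<sigma> / es g s)) (Hs g s))"

text \<open>sqrt(H_s) := sgn(H_s) sqrt|H_s| via functional calculus on H_s = e_s (P^+ - P^-).\<close>
definition sqrtH :: "real \<Rightarrow> real \<Rightarrow> cmat" where
  "sqrtH g s = cscale (of_real (sqrt (es g s))) (Ps g 1 s - Ps g (-1) s)"

definition Ls :: "(real \<Rightarrow> real) \<Rightarrow> real \<Rightarrow> real \<Rightarrow> cmat \<Rightarrow> cmat" where
  "Ls \<gamma> g s \<rho> = - cscale \<i> (comm (Hs g s) \<rho>)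
      - cscale (of_real (\<gamma> s / 2)) (comm (sqrtH g s) (comm (sqrtH g s) \<rho>))"

definition Es :: "real \<Rightarrow> real \<Rightarrow> cmat" where
  "Es g s = cscale (of_real (1 / (4 * es g s)))
     (mat2 (of_real g) (of_real (- s - 2 * es g s)) (of_real (- s + 2 * es g s)) (of_real (- g)))"

definition a_coef :: "(real \<Rightarrow> real) \<Rightarrow> real \<Rightarrow> real \<Rightarrow> real \<Rightarrow> real \<Rightarrow> cmat" where
  "a_coef \<gamma> g \<sigma> s s' =
     cscale (of_real (\<sigma> * g / (16 * (1 + (\<gamma> s)\<^sup>2) * (es g s) ^ 3)))
       (cscale (\<i> - of_real (\<gamma> s)) (Es g s) + adjoint (cscale (\<i> - of_real (\<gamma> s)) (Es g s)))
   + cscale (of_real (\<sigma> * g\<^sup>2 / 64 * integral {s'..s} (\<lambda>\<tau>. \<gamma> \<tau> / ((1 + (\<gamma> \<tau>)\<^sup>2) * (es g \<tau>) ^ 5))))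
       (Ps g (-1) s - Ps g 1 s)"

end

theory Submission
  imports Defs
begin

lemma cm_eq: "(A::cmat) = B \<longleftrightarrow> A$1$1 = B$1$1 \<and> A$1$2 = B$1$2 \<and> A$2$1 = B$2$1 \<and> A$2$2 = B$2$2"
  by (auto simp: vec_eq_iff forall_2)
lemma mat2_nth[simp]: "mat2 a b c d $1$1 = a" "mat2 a b c d $1$2 = b" "mat2 a b c d $2$1 = c" "mat2 a b c d $2$2 = d"
  by (simp_all add: mat2_def)
lemma mmult_nth[simp]: "((A::cmat) ** B)$i$j = A$i$1 * B$1$j + A$i$2 * B$2$j"
  by (simp add: matrix_matrix_mult_def UNIV_2)
lemma cscale_nth[simp]: "cscale c A $i$j = c * A$i$j" by (simp add: cscale_def)
lemma adjoint_nth[simp]: "adjoint A $i$j = cnj (A$j$i)" by (simp add: adjoint_def)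
lemma mat1_nth[simp]: "(mat 1 :: cmat)$1$1 = 1" "(mat 1 :: cmat)$1$2 = 0" "(mat 1 :: cmat)$2$1 = 0" "(mat 1 :: cmat)$2$2 = 1"
  by (simp_all add: mat_def)
lemma comm_nth[simp]: "comm A B $i$j = A$i$1 * B$1$j + A$i$2 * B$2$j - (B$i$1 * A$1$j + B$i$2 * A$2$j)"
  by (simp add: comm_def)

definition ccf :: "real \<Rightarrow> real \<Rightarrow> real" where "ccf g t = t / (2 * es g t)"
definition ddf :: "real \<Rightarrow> real \<Rightarrow> real" where "ddf g t = g / (2 * es g t)"
definition MB :: "real \<Rightarrow> real \<Rightarrow> real \<Rightarrow> real \<Rightarrow> real \<Rightarrow> cmat" where
  "MB cc dd a b c = mat2 (of_real (a * cc - b * dd)) (of_real (a * dd + b * cc) - \<i> * of_real c)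
                       (of_real (a * dd + b * cc) + \<i> * of_real c) (- of_real (a * cc - b * dd))"
definition Mb :: "real \<Rightarrow> real \<Rightarrow> real \<Rightarrow> real \<Rightarrow> real \<Rightarrow> cmat" where
  "Mb g t = MB (ccf g t) (ddf g t)"
definition NN :: "real \<Rightarrow> real \<Rightarrow> cmat" where "NN cc dd = mat2 (of_real cc) (of_real dd) (of_real dd) (- of_real cc)"

lemma es_pos: "g > 0 \<Longrightarrow> es g t > 0" by (simp add: es_def add_pos_nonneg sum_power2_gt_zero_iff)
lemma es_sq: "(es g t)^2 = (t^2 + g^2)/4" by (simp add: es_def power_divide)
lemma cc_dd_sq: "g > 0 \<Longrightarrow> (ccf g t)^2 + (ddf g t)^2 = 1"
proof -
  assume g: "g > 0"
  have E: "es g t > 0" using es_pos g by auto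
  have "(ccf g t)^2 + (ddf g t)^2 = (t^2 + g^2) / (4 * (es g t)^2)"
    by (simp add: ccf_def ddf_def power_divide power_mult_distrib add_divide_distrib)
  also have "\<dots> = 1" using g by (simp add: es_sq) (smt (verit) zero_le_power2 zero_less_power)
  finally show ?thesis .
qed

lemma Ps_Mb: "Ps g \<sigma> t = cscale (1/2) (mat 1) + Mb g t (\<sigma>/2) 0 0"
  by (simp add: cm_eq Ps_def Mb_def MB_def Hs_def ccf_def ddf_def complex_eq_iff field_simps)

lemma comm_NN: assumes "cc^2 + dd^2 = 1"
  shows "comm (NN cc dd) (MB cc dd a b c) = cscale (2*\<i>) (MB cc dd 0 (-c) b)"
  using assms
  by (simp add: cm_eq NN_def MB_def complex_eq_iff algebra_simps power2_eq_square; algebra)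

lemma comm_NN_I: "comm (NN cc dd) (cscale (1/2) (mat 1)) = 0"
  by (simp add: cm_eq NN_def)
lemma comm_add: "comm A (B + C) = comm A B + comm A C"
  by (simp add: cm_eq algebra_simps)
lemma cm_scale_ext: "comm (cscale x A) B = cscale x (comm A B)" "comm A (cscale x B) = cscale x (comm A B)"
  by (simp_all add: cm_eq algebra_simps)

lemma Hs_NN: "g > 0 \<Longrightarrow> Hs g t = cscale (of_real (es g t)) (NN (ccf g t) (ddf g t))"
  using es_pos[of g t] by (simp add: cm_eq Hs_def NN_def ccf_def ddf_def complex_eq_iff)
lemma sqrtH_NN: "g > 0 \<Longrightarrow> sqrtH g t = cscale (of_real (sqrt (es g t))) (NN (ccf g t) (ddf g t))"
  using es_pos[of g t] by (simp add: cm_eq sqrtH_def Ps_def Hs_def NN_def ccf_def ddf_def complex_eq_iff field_simps)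

lemma Ls_Mb: assumes g: "g > 0"
  shows "Ls \<gamma> g t (cscale (1/2) (mat 1) + Mb g t a b c) = Mb g t 0 (-2 * es g t * c - 2 * \<gamma> t * es g t * b) (2 * es g t * b - 2 * \<gamma> t * es g t * c)"
proof -
  have E: "es g t > 0" using es_pos g by auto
  have S: "sqrt (es g t) * sqrt (es g t) = es g t" using E by simp
  have C: "(ccf g t)^2 + (ddf g t)^2 = 1" using cc_dd_sq g by auto
  show ?thesis
    unfolding Ls_def Hs_NN[OF g] sqrtH_NN[OF g] cm_scale_ext comm_add comm_NN_I Mb_def comm_NN[OF C]
    using S by (simp add: cm_eq MB_def complex_eq_iff algebra_simps)
qed
lemma a_Mb: assumes g: "g > 0"
  shows "a_coef \<gamma> g \<sigma> t s' = Mb g t (- (\<sigma> * g\<^sup>2 / 64 * integral {s'..t} (\<lambda>\<tau>. \<gamma> \<tau> / ((1 + (\<gamma> \<tau>)\<^sup>2) * (es g \<tau>) ^ 5))))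
      (\<sigma> * g / (16 * (1 + (\<gamma> t)\<^sup>2) * (es g t) ^ 3) * \<gamma> t) (\<sigma> * g / (16 * (1 + (\<gamma> t)\<^sup>2) * (es g t) ^ 3))"
proof -
  have E: "es g t > 0" using es_pos g by auto
  have G: "1 + (\<gamma> t)\<^sup>2 \<noteq> 0" by (smt (verit) zero_le_power2)
  show ?thesis using E G
    apply (simp add: cm_eq a_coef_def Es_def Ps_def Hs_def Mb_def MB_def ccf_def ddf_def complex_eq_iff)
    apply (simp add: divide_simps)
    apply (simp_all add: algebra_simps power3_eq_cube)
    done
qed

lemma at_ray: "(a::real) \<le> t \<Longrightarrow> at t within {a..} = at t within {a..t+1}"
  by (rule at_within_nhd[where S="{..<t+1}"]) auto

lemma int_deriv_ray:
  fixes f :: "real \<Rightarrow> 'v::banach"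
  assumes "continuous_on {a..} f" "a \<le> t"
  shows "((\<lambda>x. integral {a..x} f) has_vector_derivative f t) (at t within {a..})"
proof -
  have "continuous_on {a..t+1} f" using assms(1) by (rule continuous_on_subset) auto
  then have "((\<lambda>x. integral {a..x} f) has_vector_derivative f t) (at t within {a..t+1})"
    by (rule integral_has_vector_derivative) (use assms in auto)
  then show ?thesis using at_ray[OF assms(2)] by simp
qed

lemma linear_ode_exists:
  fixes F :: "real \<Rightarrow> 'v::euclidean_space \<Rightarrow> 'v" and M :: "real \<Rightarrow> real" and a :: real and w0 :: 'v
  assumes Fc: "\<And>u. continuous_on {a..} u \<Longrightarrow> continuous_on {a..} (\<lambda>t. F t (u t))"
    and lip: "\<And>t x y. a \<le> t \<Longrightarrow> norm (F t x - F t y) \<le> M t * norm (x - y)"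
    and F0: "\<And>t. a \<le> t \<Longrightarrow> norm (F t 0) \<le> M t"
    and Mc: "continuous_on {a..} M"
  shows "\<exists>w. w a = w0 \<and> (\<forall>t\<ge>a. (w has_vector_derivative F t (w t)) (at t within {a..}))"
proof -
  have M0: "\<And>t. a \<le> t \<Longrightarrow> 0 \<le> M t" using F0 norm_ge_zero order_trans by blast
  define \<Phi> where "\<Phi> t = integral {a..t} (\<lambda>\<tau>. 2 * M \<tau>)" for t
  have Mc2: "continuous_on {a..} (\<lambda>\<tau>. 2 * M \<tau>)" using Mc by (intro continuous_intros)
  have \<Phi>d: "(\<Phi> has_real_derivative 2 * M t) (at t within {a..})" if "a \<le> t" for t
    unfolding \<Phi>_def has_real_derivative_iff_has_vector_derivative by (rule int_deriv_ray[OF Mc2 that])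
  have \<Phi>c: "continuous_on {a..} \<Phi>"
    using \<Phi>d by (auto intro!: continuous_on_vector_derivative simp: has_real_derivative_iff_has_vector_derivative)
  have \<Phi>0: "\<Phi> a = 0" by (simp add: \<Phi>_def)
  have \<Phi>nn: "0 \<le> \<Phi> t" if "a \<le> t" for t
    unfolding \<Phi>_def by (rule integral_nonneg) (auto intro!: integrable_continuous_real continuous_on_subset[OF Mc] continuous_intros M0)
  have Mexp_int: "integral {a..t} (\<lambda>\<tau>. M \<tau> * exp (\<Phi> \<tau>)) = (exp (\<Phi> t) - 1) / 2" if t: "a \<le> t" for t
  proof -
    have "((\<lambda>\<tau>. M \<tau> * exp (\<Phi> \<tau>)) has_integral ((\<lambda>\<tau>. exp (\<Phi> \<tau>) / 2) t - (\<lambda>\<tau>. exp (\<Phi> \<tau>) / 2) a)) {a..t}"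
    proof (rule fundamental_theorem_of_calculus[OF t])
      fix x assume x: "x \<in> {a..t}"
      have "((\<lambda>\<tau>. exp (\<Phi> \<tau>) / 2) has_real_derivative exp (\<Phi> x) * (2 * M x) / 2) (at x within {a..})"
        using \<Phi>d[of x] x by (auto intro!: derivative_eq_intros)
      moreover have "exp (\<Phi> x) * (2 * M x) / 2 = M x * exp (\<Phi> x)" by simp
      ultimately have "((\<lambda>\<tau>. exp (\<Phi> \<tau>) / 2) has_vector_derivative M x * exp (\<Phi> x)) (at x within {a..})"
        by (simp add: has_real_derivative_iff_has_vector_derivative)
      then show "((\<lambda>\<tau>. exp (\<Phi> \<tau>) / 2) has_vector_derivative M x * exp (\<Phi> x)) (at x within {a..t})"
        by (rule has_vector_derivative_within_subset) auto
    qed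
    then show ?thesis using \<Phi>0 by (auto dest: integral_unique simp: diff_divide_distrib)
  qed
  define cl where "cl t = max a t" for t
  define G where "G u \<tau> = F \<tau> (exp (\<Phi> \<tau>) *\<^sub>R apply_bcontfun u \<tau>)" for u :: "real \<Rightarrow>\<^sub>C 'v" and \<tau>
  have Gc: "continuous_on {a..} (G u)" for u
    unfolding G_def by (rule Fc) (intro continuous_intros \<Phi>c continuous_on_apply_bcontfun)
  have Gi: "G u integrable_on {a..t}" for u t
    by (rule integrable_continuous_real, rule continuous_on_subset[OF Gc]) auto
  have Mei: "(\<lambda>\<tau>. M \<tau> * exp (\<Phi> \<tau>)) integrable_on {a..t}" for t
    by (rule integrable_continuous_real, rule continuous_on_subset[of "{a..}"]) (auto intro!: continuous_intros Mc \<Phi>c)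
  define h where "h u t = exp (- \<Phi> t) *\<^sub>R (w0 + integral {a..t} (G u))" for u t
  have hd: "((\<lambda>t. w0 + integral {a..t} (G u)) has_vector_derivative G u t) (at t within {a..})" if "a \<le> t" for u t
    using int_deriv_ray[OF Gc that] by (auto intro!: derivative_eq_intros)
  have hc: "continuous_on {a..} (h u)" for u
  proof -
    have "continuous_on {a..} (\<lambda>t. integral {a..t} (G u))"
      using int_deriv_ray[OF Gc] by (auto intro!: continuous_on_vector_derivative)
    then show ?thesis unfolding h_def by (intro continuous_intros \<Phi>c)
  qed
  have Gbound: "norm (G u \<tau>) \<le> (1 + norm u) * (M \<tau> * exp (\<Phi> \<tau>))" if \<tau>: "a \<le> \<tau>" for u \<tau>
  proof -
    let ?x = "exp (\<Phi> \<tau>) *\<^sub>R apply_bcontfun u \<tau>"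
    have nx: "norm ?x \<le> exp (\<Phi> \<tau>) * norm u" using norm_bounded[of u \<tau>] by simp
    have nx2: "M \<tau> * norm ?x \<le> M \<tau> * (exp (\<Phi> \<tau>) * norm u)" using M0[OF \<tau>] nx by (rule mult_left_mono[rotated])
    have "norm (G u \<tau>) \<le> norm (F \<tau> 0) + norm (F \<tau> ?x - F \<tau> 0)"
      unfolding G_def by (metis add.commute diff_add_cancel norm_triangle_ineq)
    also have "\<dots> \<le> M \<tau> + M \<tau> * norm ?x" using F0[OF \<tau>] lip[OF \<tau>, of ?x 0] by simp
    also have "\<dots> \<le> M \<tau> + M \<tau> * (exp (\<Phi> \<tau>) * norm u)" using nx2 by simp
    finally have "norm (G u \<tau>) \<le> M \<tau> + M \<tau> * (exp (\<Phi> \<tau>) * norm u)" by simp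
    moreover have "M \<tau> \<le> M \<tau> * exp (\<Phi> \<tau>)" using M0[OF \<tau>] \<Phi>nn[OF \<tau>] by (simp add: mult_le_cancel_left1)
    ultimately show ?thesis by (simp add: algebra_simps)
  qed
  have Gdiff: "norm (G u \<tau> - G v \<tau>) \<le> dist u v * (M \<tau> * exp (\<Phi> \<tau>))" if \<tau>: "a \<le> \<tau>" for u v \<tau>
  proof -
    have "norm (G u \<tau> - G v \<tau>) \<le> M \<tau> * norm (exp (\<Phi> \<tau>) *\<^sub>R apply_bcontfun u \<tau> - exp (\<Phi> \<tau>) *\<^sub>R apply_bcontfun v \<tau>)"
      unfolding G_def by (rule lip[OF \<tau>])
    also have "\<dots> = M \<tau> * exp (\<Phi> \<tau>) * dist (apply_bcontfun u \<tau>) (apply_bcontfun v \<tau>)"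
      by (simp add: dist_norm flip: scaleR_diff_right)
    also have "\<dots> \<le> M \<tau> * exp (\<Phi> \<tau>) * dist u v"
      using M0[OF \<tau>] by (intro mult_left_mono dist_bounded) auto
    finally show ?thesis by (simp add: algebra_simps)
  qed
  have hbound: "norm (h u t) \<le> norm w0 + (1 + norm u) / 2" if t: "a \<le> t" for u t
  proof -
    have "norm (integral {a..t} (G u)) \<le> integral {a..t} (\<lambda>\<tau>. (1 + norm u) * (M \<tau> * exp (\<Phi> \<tau>)))"
      by (rule integral_norm_bound_integral[OF Gi]) (auto intro!: Gbound integrable_on_mult_right Mei)
    also have "\<dots> = (1 + norm u) * ((exp (\<Phi> t) - 1) / 2)"
      using Mexp_int[OF t] by (simp add: integral_mult[symmetric] Mei)
    finally have I: "norm (integral {a..t} (G u)) \<le> (1 + norm u) * ((exp (\<Phi> t) - 1) / 2)" .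
    have "norm (h u t) = exp (- \<Phi> t) * norm (w0 + integral {a..t} (G u))" by (simp add: h_def)
    also have "\<dots> \<le> exp (- \<Phi> t) * (norm w0 + (1 + norm u) * ((exp (\<Phi> t) - 1) / 2))"
      by (intro mult_left_mono order_trans[OF norm_triangle_ineq] add_left_mono I) auto
    also have "\<dots> = exp (- \<Phi> t) * norm w0 + (1 + norm u) * ((1 - exp (- \<Phi> t)) / 2)"
      by (simp add: algebra_simps exp_minus field_simps)
    also have "\<dots> \<le> norm w0 + (1 + norm u) / 2"
    proof -
      have "exp (- \<Phi> t) \<le> 1" using \<Phi>nn[OF t] by simp
      then have "exp (- \<Phi> t) * norm w0 \<le> norm w0" by (simp add: mult_left_le_one_le)
      moreover have "(1 + norm u) * ((1 - exp (- \<Phi> t)) / 2) \<le> (1 + norm u) * (1 / 2)"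
        by (rule mult_left_mono) (auto simp: add_nonneg_nonneg)
      ultimately show ?thesis by linarith
    qed
    finally show ?thesis .
  qed
  have hdiff: "norm (h u t - h v t) \<le> dist u v / 2" if t: "a \<le> t" for u v t
  proof -
    have "norm (integral {a..t} (G u) - integral {a..t} (G v)) = norm (integral {a..t} (\<lambda>\<tau>. G u \<tau> - G v \<tau>))"
      by (simp add: integral_diff Gi)
    also have "\<dots> \<le> integral {a..t} (\<lambda>\<tau>. dist u v * (M \<tau> * exp (\<Phi> \<tau>)))"
      by (rule integral_norm_bound_integral) (auto intro!: Gdiff integrable_diff Gi integrable_on_mult_right Mei)
    also have "\<dots> = dist u v * ((exp (\<Phi> t) - 1) / 2)"
      using Mexp_int[OF t] by (simp add: integral_mult[symmetric] Mei)
    finally have I: "norm (integral {a..t} (G u) - integral {a..t} (G v)) \<le> dist u v * ((exp (\<Phi> t) - 1) / 2)" .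
    have "norm (h u t - h v t) = exp (- \<Phi> t) * norm (integral {a..t} (G u) - integral {a..t} (G v))"
      by (simp add: h_def flip: scaleR_diff_right)
    also have "\<dots> \<le> exp (- \<Phi> t) * (dist u v * ((exp (\<Phi> t) - 1) / 2))"
      by (intro mult_left_mono I) auto
    also have "\<dots> = dist u v * ((1 - exp (- \<Phi> t)) / 2)"
      by (simp add: algebra_simps exp_minus field_simps)
    also have "\<dots> \<le> dist u v * (1 / 2)"
      by (rule mult_left_mono) auto
    finally show ?thesis by simp
  qed
  have clc: "continuous_on UNIV cl" unfolding cl_def by (intro continuous_intros)
  have cla: "cl t \<ge> a" for t by (simp add: cl_def)
  have hmem: "(\<lambda>t. h u (cl t)) \<in> bcontfun" for u
  proof (rule bcontfun_normI)
    show "continuous_on UNIV (\<lambda>t. h u (cl t))"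
      by (rule continuous_on_compose2[OF hc clc]) (auto simp: cla)
    show "norm (h u (cl t)) \<le> norm w0 + (1 + norm u) / 2" for t by (rule hbound[OF cla])
  qed
  define T where "T u = Bcontfun (\<lambda>t. h u (cl t))" for u
  have Tapp: "apply_bcontfun (T u) t = h u (cl t)" for u t
    using hmem[of u] by (simp add: T_def Bcontfun_inverse)
  have contr: "\<forall>x y. dist (T x) (T y) \<le> 1/2 * dist x y"
  proof (intro allI)
    fix x y
    show "dist (T x) (T y) \<le> 1/2 * dist x y"
      by (rule dist_bound) (use hdiff[OF cla] in \<open>simp add: Tapp dist_norm\<close>)
  qed
  obtain u where u: "T u = u" using banach_fix_type[of "1/2" T] contr by auto
  define w where "w t = exp (\<Phi> t) *\<^sub>R apply_bcontfun u t" for t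
  have weq: "w t = w0 + integral {a..t} (G u)" if t: "a \<le> t" for t
  proof -
    have "apply_bcontfun u t = h u t" using Tapp[of u t] t by (simp add: u cl_def)
    then show ?thesis by (simp add: w_def h_def exp_minus)
  qed
  have Gw: "G u \<tau> = F \<tau> (w \<tau>)" for \<tau> by (simp add: G_def w_def)
  show ?thesis
  proof (intro exI conjI allI impI)
    show "w a = w0" using weq[of a] by simp
    fix t assume t: "a \<le> t"
    show "(w has_vector_derivative F t (w t)) (at t within {a..})"
    proof -
      have "((\<lambda>t. w0 + integral {a..t} (G u)) has_vector_derivative F t (w t)) (at t within {a..})"
        using hd[OF t, of u] by (simp add: Gw)
      then show ?thesis
        by (rule has_vector_derivative_transform_within[where d=1]) (use t weq in auto)
    qed
  qed
qed

locale sysl =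
  fixes g :: real and \<gamma> \<gamma>1 \<gamma>2 :: "real \<Rightarrow> real"
  assumes g_pos: "g > 0" and gnn: "\<And>t. \<gamma> t \<ge> 0"
    and d0: "\<And>t. (\<gamma> has_real_derivative \<gamma>1 t) (at t)"
    and d1: "\<And>t. (\<gamma>1 has_real_derivative \<gamma>2 t) (at t)"
    and c2: "continuous_on UNIV \<gamma>2"
begin

definition E where "E t = es g t"
definition w where "w t = 1 / E t"
definition uu :: "real \<Rightarrow> complex" where "uu t = inverse (of_real (\<gamma> t) - \<i>)"

lemma E_pos: "E t > 0" using es_pos[OF g_pos] by (simp add: E_def)
lemma w_pos: "w t > 0" using E_pos by (simp add: w_def)
lemma E_sq: "(E t)^2 = (t^2 + g^2)/4" by (simp add: E_def es_sq)
lemma w_sq: "(w t)^2 = 4 / (t^2 + g^2)" unfolding w_def power_divide E_sq by simp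
lemma E_ge: "E t \<ge> g / 2"
proof -
  have "(g/2)^2 \<le> (E t)^2" by (simp add: E_sq power_divide)
  from power2_le_imp_le[OF this] show ?thesis using E_pos[of t] by auto
qed
lemma w_le: "w t \<le> 2 / g"
  using E_ge[of t] g_pos E_pos[of t] by (simp add: w_def field_simps)
lemma tw_le: "\<bar>t * w t\<bar> \<le> 2"
proof -
  have "t^2 \<le> (2 * E t)^2" by (simp add: power_mult_distrib E_sq)
  then have "\<bar>t\<bar> \<le> 2 * E t" using E_pos by (metis abs_le_square_iff abs_of_pos mult_pos_pos zero_less_numeral)
  then show ?thesis using E_pos[of t] by (simp add: w_def abs_mult field_simps)
qed

lemma E_deriv: "(E has_real_derivative t / (4 * E t)) (at t)"
proof (rule DERIV_cong)
  have p: "t^2 + g^2 > 0" using g_pos by (simp add: add_nonneg_pos)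
  have Eeq: "E = (\<lambda>t. sqrt (t^2+g^2)/2)" by (auto simp: E_def es_def fun_eq_iff)
  show "(E has_real_derivative (inverse (sqrt (t^2 + g^2)) / 2 * (2 * t)) / 2) (at t)"
    unfolding Eeq using p by (auto intro!: derivative_eq_intros)
  show "(inverse (sqrt (t^2 + g^2)) / 2 * (2 * t)) / 2 = t / (4 * E t)"
    by (simp add: E_def es_def field_simps)
qed

lemma w_deriv: "(w has_real_derivative - (t * w t ^ 3) / 4) (at t)"
proof (rule DERIV_cong)
  have weq: "w = (\<lambda>t. 1 / E t)" by (auto simp: w_def fun_eq_iff)
  show "(w has_real_derivative - (t / (4 * E t)) / (E t)^2) (at t)"
    unfolding weq using E_pos[of t] by (auto intro!: derivative_eq_intros E_deriv simp: power2_eq_square)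
  show "- (t / (4 * E t)) / (E t)^2 = - (t * w t ^ 3) / 4"
    using E_pos[of t] by (simp add: w_def field_simps power2_eq_square power3_eq_cube)
qed

lemma uu_nz: "of_real (\<gamma> t) - \<i> \<noteq> 0" by (simp add: complex_eq_iff)
lemma uu_inv: "(of_real (\<gamma> t) - \<i>) * uu t = 1" using uu_nz by (simp add: uu_def)
lemma uu_Re: "Re (uu t) = \<gamma> t / (1 + (\<gamma> t)^2)" by (simp add: uu_def Re_divide power2_eq_square)
lemma uu_Im: "Im (uu t) = 1 / (1 + (\<gamma> t)^2)" by (simp add: uu_def Im_divide power2_eq_square)
lemma uu_norm: "cmod (uu t) \<le> 1"
proof -
  have "1 \<le> cmod (of_real (\<gamma> t) - \<i>)" by (simp add: cmod_def)
  then show ?thesis by (simp add: uu_def norm_inverse inverse_le_1_iff)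
qed
lemma uu_deriv: "(uu has_vector_derivative - (of_real (\<gamma>1 t) * uu t * uu t)) (at t within S)"
proof -
  have f: "((\<lambda>t. of_real (\<gamma> t) - \<i>) has_vector_derivative of_real (\<gamma>1 t)) (at t within S)"
    by (auto intro!: derivative_eq_intros has_field_derivative_at_within[OF d0])
  have "((inverse \<circ> (\<lambda>t. of_real (\<gamma> t) - \<i>)) has_vector_derivative of_real (\<gamma>1 t) * - (inverse (of_real (\<gamma> t) - \<i>) ^ Suc (Suc 0))) (at t within S)"
    by (rule field_vector_diff_chain_within[OF f DERIV_inverse[OF uu_nz]])
  then show ?thesis by (simp add: uu_def[abs_def] o_def mult.assoc)
qed
end

context sysl begin

lemma g_cont: "continuous_on UNIV \<gamma>"
  using d0 by (auto intro!: continuous_at_imp_continuous_on DERIV_isCont)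
lemma g1_cont: "continuous_on UNIV \<gamma>1"
  using d1 by (auto intro!: continuous_at_imp_continuous_on DERIV_isCont)
lemma E_cont: "continuous_on UNIV E"
  using E_deriv by (auto intro!: continuous_at_imp_continuous_on DERIV_isCont)
lemma w_cont: "continuous_on UNIV w"
  using w_deriv by (auto intro!: continuous_at_imp_continuous_on DERIV_isCont)
lemma uu_cont: "continuous_on UNIV uu"
  by (rule continuous_on_vector_derivative[OF uu_deriv])

definition jt where "jt t = \<gamma> t / (1 + (\<gamma> t)^2)"
definition jj where "jj t = \<gamma> t / ((1 + (\<gamma> t)^2) * E t ^ 5)"
definition JJ where "JJ s' t = integral {s'..t} jj"
definition th where "th t = g / (4 * E t ^ 2)"
definition z1 :: "real \<Rightarrow> real \<Rightarrow> complex" where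
  "z1 \<sigma> t = of_real (\<sigma> * g / 16) * uu t * of_real (w t ^ 3)"
definition z1d :: "real \<Rightarrow> real \<Rightarrow> complex" where
  "z1d \<sigma> t = of_real (\<sigma> * g / 16) * (- (of_real (\<gamma>1 t) * uu t * uu t) * of_real (w t ^ 3) + uu t * of_real (- 3 * t * w t ^ 5 / 4))"
definition al1 where "al1 \<sigma> s' t = - (\<sigma> * g^2 / 64 * JJ s' t)"
definition qq :: "real \<Rightarrow> real \<Rightarrow> real \<Rightarrow> complex" where
  "qq \<sigma> s' t = of_real (\<sigma> * g / 32) * (of_real (\<gamma>1 t) * uu t * uu t * uu t * of_real (w t ^ 4)
      + of_real (3/4 * t * w t ^ 6) * uu t * uu t - of_real (g^2/16 * w t ^ 3 * JJ s' t) * uu t)"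
definition qd :: "real \<Rightarrow> real \<Rightarrow> real \<Rightarrow> complex" where
  "qd \<sigma> s' t = of_real (\<sigma> * g / 32) * (
      of_real (\<gamma>2 t * w t ^ 4) * uu t * uu t * uu t
    - of_real (3 * (\<gamma>1 t)^2 * w t ^ 4) * uu t * uu t * uu t * uu t
    - of_real (t * \<gamma>1 t * w t ^ 6) * uu t * uu t * uu t
    + of_real (3/4 * w t ^ 6) * uu t * uu t
    - of_real (3/2 * t * \<gamma>1 t * w t ^ 6) * uu t * uu t * uu t
    - of_real (9/8 * t^2 * w t ^ 8) * uu t * uu t
    + of_real (g^2/16 * \<gamma>1 t * w t ^ 3 * JJ s' t) * uu t * uu t
    + of_real (3 * g^2/64 * t * w t ^ 5 * JJ s' t) * uu t
    - of_real (g^2/16 * w t ^ 3 * jj t) * uu t)"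

lemma gp_nz: "1 + (\<gamma> t)^2 \<noteq> 0" by (smt (verit) zero_le_power2)
lemma E_nz: "E t \<noteq> 0" using E_pos[of t] by simp
lemma jj_cont: "continuous_on UNIV jj"
  unfolding jj_def using E_nz gp_nz
  by (intro continuous_intros g_cont E_cont) auto
lemma jj_jt: "jj t = jt t * w t ^ 5"
  by (simp add: jj_def jt_def w_def power_one_over)
lemma jt_bnd: "0 \<le> jt t \<and> jt t \<le> 1/2"
proof -
  have "0 \<le> (1 - \<gamma> t)^2" by simp
  then have "2 * \<gamma> t \<le> 1 + (\<gamma> t)^2" by (simp add: power2_diff)
  then show ?thesis using gnn[of t] by (auto simp: jt_def field_simps add_pos_nonneg)
qed
lemma JJ_deriv: "s' \<le> t \<Longrightarrow> (JJ s' has_real_derivative jj t) (at t within {s'..})"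
  unfolding JJ_def[abs_def] has_real_derivative_iff_has_vector_derivative
  by (rule int_deriv_ray) (auto intro: continuous_on_subset[OF jj_cont])
lemma JJ_cont: "continuous_on {s'..} (JJ s')"
  using JJ_deriv by (auto intro!: continuous_on_vector_derivative simp: has_real_derivative_iff_has_vector_derivative)

lemma th_w: "th t = g * w t ^ 2 / 4" by (simp add: th_def w_def power_one_over)

lemma z1_deriv: "(z1 \<sigma> has_vector_derivative z1d \<sigma> t) (at t within S)"
  unfolding z1_def[abs_def] z1d_def
  by (rule derivative_eq_intros uu_deriv has_field_derivative_at_within[OF w_deriv] refl | simp)+
    (simp add: algebra_simps)

lemma qq_deriv: assumes "s' \<le> t" shows "(qq \<sigma> s' has_vector_derivative qd \<sigma> s' t) (at t within {s'..})"
  unfolding qq_def[abs_def] qd_def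
  by (rule derivative_eq_intros uu_deriv has_field_derivative_at_within[OF w_deriv]
      has_field_derivative_at_within[OF d1] JJ_deriv refl | simp add: assms)+
    (simp add: algebra_simps jj_def eval_nat_numeral)
lemma Ew: "E t * w t = 1" using E_nz by (simp add: w_def)

lemma qq_rel: "of_real (2 * E t) * (\<i> - of_real (\<gamma> t)) * qq \<sigma> s' t = z1d \<sigma> t - of_real (th t * al1 \<sigma> s' t)"
proof -
  have u: "(of_real (\<gamma> t) - \<i>) * uu t = 1" by (rule uu_inv)
  have e: "of_real (E t) * of_real (w t) = (1::complex)" using Ew by (metis of_real_1 of_real_mult)
  show ?thesis unfolding qq_def z1d_def th_w al1_def using u e
    by (simp add: algebra_simps eval_nat_numeral) algebra
qed

lemma z1_bal: "of_real (th t * (\<sigma>/2)) + of_real (2 * E t) * (\<i> - of_real (\<gamma> t)) * z1 \<sigma> t = 0"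
proof -
  have u: "(of_real (\<gamma> t) - \<i>) * uu t = 1" by (rule uu_inv)
  have e: "of_real (E t) * of_real (w t) = (1::complex)" using Ew by (metis of_real_1 of_real_mult)
  show ?thesis unfolding z1_def th_w using u e
    by (simp add: algebra_simps eval_nat_numeral) algebra
qed

lemma z1_Re: "Re (z1 \<sigma> t) = \<sigma> * g / (16 * (1 + (\<gamma> t)\<^sup>2) * (es g t) ^ 3) * \<gamma> t"
  by (simp add: z1_def uu_Re w_def E_def power_one_over)
lemma z1_Im: "Im (z1 \<sigma> t) = \<sigma> * g / (16 * (1 + (\<gamma> t)\<^sup>2) * (es g t) ^ 3)"
  by (simp add: z1_def uu_Im w_def E_def power_one_over)

lemma al1_deriv: assumes "s' \<le> t" shows "(al1 \<sigma> s' has_real_derivative - (th t * Re (z1 \<sigma> t))) (at t within {s'..})"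
proof (rule DERIV_cong)
  show "(al1 \<sigma> s' has_real_derivative - (\<sigma> * g^2 / 64 * jj t)) (at t within {s'..})"
    unfolding al1_def[abs_def] by (auto intro!: derivative_eq_intros JJ_deriv assms)
  show "- (\<sigma> * g^2 / 64 * jj t) = - (th t * Re (z1 \<sigma> t))"
    using E_nz gp_nz by (simp add: z1_Re jj_def th_def E_def field_simps power2_eq_square eval_nat_numeral)
qed
end

context sysl begin

lemma th_nn: "0 \<le> th t" using g_pos by (simp add: th_def)
lemma th_cont: "continuous_on UNIV th"
proof -
  have "th = (\<lambda>t. g * w t ^ 2 / 4)" by (simp add: fun_eq_iff th_w)
  show ?thesis unfolding \<open>th = _\<close> by (intro continuous_intros w_cont) auto
qed
lemma z1d_cont: "continuous_on UNIV (z1d \<sigma>)"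
  unfolding z1d_def by (intro continuous_intros uu_cont w_cont g1_cont) auto
lemma al1_cont: "continuous_on {s'..} (al1 \<sigma> s')"
  unfolding al1_def by (intro continuous_intros JJ_cont)

definition FF :: "real \<Rightarrow> real \<Rightarrow> real \<Rightarrow> real \<Rightarrow> real \<times> complex \<Rightarrow> real \<times> complex" where
  "FF \<sigma> \<epsilon> s' t p = (- (th t * Re (snd p)),
     of_real (2 * E t / \<epsilon>) * (\<i> - of_real (\<gamma> t)) * snd p + of_real (th t * fst p)
       + (of_real (th t * al1 \<sigma> s' t) - z1d \<sigma> t) / of_real \<epsilon>)"

definition odesol where
  "odesol \<sigma> \<epsilon> s' p \<longleftrightarrow> p s' = (0, qq \<sigma> s' s') \<and> (\<forall>t\<ge>s'. (p has_vector_derivative FF \<sigma> \<epsilon> s' t (p t)) (at t within {s'..}))"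

definition psol where "psol \<sigma> \<epsilon> s' = (SOME p. odesol \<sigma> \<epsilon> s' p)"

lemma nsd: "cmod (snd d) \<le> norm (d::real \<times> complex)" by (metis norm_snd_le prod.collapse)
lemma nfd: "\<bar>fst d\<bar> \<le> norm (d::real \<times> complex)" by (metis norm_fst_le prod.collapse real_norm_def)

lemma cmod_ig: "cmod (\<i> - of_real (\<gamma> t)) \<le> 1 + \<gamma> t"
proof -
  have "cmod (\<i> - of_real (\<gamma> t)) \<le> cmod \<i> + cmod (of_real (\<gamma> t))" by (rule norm_triangle_ineq4)
  then show ?thesis using gnn[of t] by simp
qed

lemma psol_ok: assumes e: "\<epsilon> > 0" shows "odesol \<sigma> \<epsilon> s' (psol \<sigma> \<epsilon> s')"
proof -
  define frc where "frc t = (of_real (th t * al1 \<sigma> s' t) - z1d \<sigma> t) / of_real \<epsilon>" for t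
  define M where "M t = 2 * th t + 2 * E t * (1 + \<gamma> t) / \<epsilon> + cmod (frc t)" for t
  have FFe: "FF \<sigma> \<epsilon> s' t p = (- (th t * Re (snd p)), of_real (2 * E t / \<epsilon>) * (\<i> - of_real (\<gamma> t)) * snd p + of_real (th t * fst p) + frc t)" for t p
    by (simp add: FF_def frc_def)
  have frc_cont: "continuous_on {s'..} frc"
  proof -
    have "frc = (\<lambda>t. (of_real (th t * al1 \<sigma> s' t) - z1d \<sigma> t) * of_real (1 / \<epsilon>))"
      by (simp add: fun_eq_iff frc_def divide_inverse)
    show ?thesis unfolding \<open>frc = _\<close> by (intro continuous_intros al1_cont continuous_on_subset[OF th_cont] continuous_on_subset[OF z1d_cont] subset_UNIV)
  qed
  have Ex: "\<exists>p. p s' = (0, qq \<sigma> s' s') \<and> (\<forall>t\<ge>s'. (p has_vector_derivative FF \<sigma> \<epsilon> s' t (p t)) (at t within {s'..}))"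
  proof (rule linear_ode_exists[where M=M])
    fix u :: "real \<Rightarrow> real \<times> complex" assume u: "continuous_on {s'..} u"
    show "continuous_on {s'..} (\<lambda>t. FF \<sigma> \<epsilon> s' t (u t))"
      unfolding FFe by (intro continuous_intros u frc_cont continuous_on_subset[OF th_cont]
          continuous_on_subset[OF E_cont] continuous_on_subset[OF g_cont] subset_UNIV) (use e in auto)
  next
    fix t and x y :: "real \<times> complex" assume t: "s' \<le> t"
    let ?d = "x - y"
    have "FF \<sigma> \<epsilon> s' t x - FF \<sigma> \<epsilon> s' t y = (- (th t * Re (snd ?d)), of_real (2 * E t / \<epsilon>) * (\<i> - of_real (\<gamma> t)) * snd ?d + of_real (th t * fst ?d))"
      using e by (simp add: FFe field_simps)
    also have "norm \<dots> \<le> norm (- (th t * Re (snd ?d))) + norm (of_real (2 * E t / \<epsilon>) * (\<i> - of_real (\<gamma> t)) * snd ?d + of_real (th t * fst ?d))"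
      by (rule norm_Pair_le)
    also have "\<dots> \<le> th t * norm ?d + ((2 * E t * (1 + \<gamma> t) / \<epsilon>) * norm ?d + th t * norm ?d)"
    proof (rule add_mono)
      have "\<bar>Re (snd ?d)\<bar> \<le> norm ?d" using abs_Re_le_cmod[of "snd ?d"] nsd[of ?d] by simp
      then show "norm (- (th t * Re (snd ?d))) \<le> th t * norm ?d"
        using th_nn[of t] by (simp add: abs_mult mult_left_mono)
      have a: "cmod (of_real (2 * E t / \<epsilon>) * (\<i> - of_real (\<gamma> t)) * snd ?d) \<le> (2 * E t * (1 + \<gamma> t) / \<epsilon>) * norm ?d"
      proof -
        have "cmod (of_real (2 * E t / \<epsilon>) * (\<i> - of_real (\<gamma> t)) * snd ?d) = (2 * E t / \<epsilon>) * cmod (\<i> - of_real (\<gamma> t)) * cmod (snd ?d)"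
          using E_pos[of t] e by (simp add: norm_mult norm_divide abs_of_pos)
        also have "\<dots> \<le> (2 * E t / \<epsilon>) * (1 + \<gamma> t) * norm ?d"
          using E_pos[of t] e cmod_ig[of t] nsd[of ?d] gnn[of t]
          by (intro mult_mono) auto
        finally show ?thesis by simp
      qed
      have b0: "cmod (of_real (th t * fst ?d)) = th t * \<bar>fst ?d\<bar>"
        by (metis abs_mult abs_of_nonneg norm_of_real th_nn)
      have b: "cmod (of_real (th t * fst ?d)) \<le> th t * norm ?d"
        unfolding b0 using th_nn[of t] nfd[of ?d] by (rule mult_left_mono[rotated])
      show "norm (of_real (2 * E t / \<epsilon>) * (\<i> - of_real (\<gamma> t)) * snd ?d + of_real (th t * fst ?d)) \<le> (2 * E t * (1 + \<gamma> t) / \<epsilon>) * norm ?d + th t * norm ?d"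
        using norm_triangle_ineq[of "of_real (2 * E t / \<epsilon>) * (\<i> - of_real (\<gamma> t)) * snd ?d" "of_real (th t * fst ?d)"] a b
        by simp
    qed
    also have "\<dots> \<le> M t * norm ?d"
      by (simp add: M_def algebra_simps mult_left_mono)
    finally show "norm (FF \<sigma> \<epsilon> s' t x - FF \<sigma> \<epsilon> s' t y) \<le> M t * norm (x - y)" .
  next
    fix t assume t: "s' \<le> t"
    have "norm (FF \<sigma> \<epsilon> s' t 0) = cmod (frc t)" by (simp add: FFe)
    also have "\<dots> \<le> M t" using th_nn[of t] E_pos[of t] gnn[of t] e by (simp add: M_def add_nonneg_nonneg)
    finally show "norm (FF \<sigma> \<epsilon> s' t 0) \<le> M t" .
  next
    show "continuous_on {s'..} M"
    proof -
      have "M = (\<lambda>t. 2 * th t + 2 * E t * (1 + \<gamma> t) * (1 / \<epsilon>) + cmod (frc t))"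
        by (simp add: fun_eq_iff M_def)
      show ?thesis unfolding \<open>M = _\<close> by (intro continuous_intros frc_cont continuous_on_subset[OF th_cont]
          continuous_on_subset[OF E_cont] continuous_on_subset[OF g_cont] subset_UNIV)
    qed
  qed
  then show ?thesis unfolding psol_def odesol_def[abs_def] by (rule someI_ex)
qed

end

definition Xm :: cmat where "Xm = mat2 0 1 1 0"
definition Ym :: cmat where "Ym = mat2 0 (- \<i>) \<i> 0"
definition Zm :: cmat where "Zm = mat2 1 0 0 (-1)"

lemma MB_pauli: fixes cc dd a b c :: real shows "MB cc dd a b c = (a*dd + b*cc) *\<^sub>R Xm + c *\<^sub>R Ym + (a*cc - b*dd) *\<^sub>R Zm"
  by (simp add: cm_eq MB_def Xm_def Ym_def Zm_def) (simp add: scaleR_conv_of_real complex_eq_iff algebra_simps)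

lemma Mb_lin: "Mb g t a b c + x *\<^sub>R Mb g t a' b' c' = Mb g t (a + x*a') (b + x*b') (c + x*c')"
  by (simp add: Mb_def MB_pauli algebra_simps scaleR_add_left)

lemma Mb_scale: "x *\<^sub>R Mb g t a b c = Mb g t (x*a) (x*b) (x*c)"
  by (simp add: Mb_def MB_pauli algebra_simps)

context sysl begin

lemma cc_deriv: "((\<lambda>t. ccf g t) has_real_derivative th t * ddf g t) (at t)"
proof (rule DERIV_cong)
  have eq: "(\<lambda>t. ccf g t) = (\<lambda>t. t / (2 * E t))" by (simp add: fun_eq_iff ccf_def E_def)
  show "((\<lambda>t. ccf g t) has_real_derivative (1 * (2 * E t) - t * (2 * (t / (4 * E t)))) / (2 * E t)^2) (at t)"
    unfolding eq using E_nz[of t] by (auto intro!: derivative_eq_intros E_deriv simp: power2_eq_square)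
  show "(1 * (2 * E t) - t * (2 * (t / (4 * E t)))) / (2 * E t)^2 = th t * ddf g t"
    using E_nz[of t] E_sq[of t] by (simp add: th_def ddf_def E_def[symmetric] field_simps power2_eq_square eval_nat_numeral)
qed

lemma dd_deriv: "((\<lambda>t. ddf g t) has_real_derivative - (th t * ccf g t)) (at t)"
proof (rule DERIV_cong)
  have eq: "(\<lambda>t. ddf g t) = (\<lambda>t. g / (2 * E t))" by (simp add: fun_eq_iff ddf_def E_def)
  show "((\<lambda>t. ddf g t) has_real_derivative - (g * (2 * (t / (4 * E t)))) / (2 * E t)^2) (at t)"
    unfolding eq using E_nz[of t] by (auto intro!: derivative_eq_intros E_deriv simp: power2_eq_square)
  show "- (g * (2 * (t / (4 * E t)))) / (2 * E t)^2 = - (th t * ccf g t)"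
    using E_nz[of t] by (simp add: th_def ccf_def E_def[symmetric] field_simps power2_eq_square eval_nat_numeral)
qed

lemma Mb_deriv:
  assumes A: "(A has_real_derivative A') (at t within S)" and B: "(B has_real_derivative B') (at t within S)"
    and C: "(C has_real_derivative C') (at t within S)"
  shows "((\<lambda>t. Mb g t (A t) (B t) (C t)) has_vector_derivative Mb g t (A' + th t * B t) (B' - th t * A t) C') (at t within S)"
proof -
  note cd = has_field_derivative_at_within[OF cc_deriv] and dd = has_field_derivative_at_within[OF dd_deriv]
  have eq: "(A' * ddf g t + A t * - (th t * ccf g t) + (B' * ccf g t + B t * (th t * ddf g t))) *\<^sub>R Xm + C' *\<^sub>R Ym
     + (A' * ccf g t + A t * (th t * ddf g t) - (B' * ddf g t + B t * - (th t * ccf g t))) *\<^sub>R Zm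
     = Mb g t (A' + th t * B t) (B' - th t * A t) C'"
    by (simp add: Mb_def MB_def cm_eq Xm_def Ym_def Zm_def) (simp add: scaleR_conv_of_real complex_eq_iff algebra_simps)
  have d: "((\<lambda>t. Mb g t (A t) (B t) (C t)) has_vector_derivative
     (A' * ddf g t + A t * - (th t * ccf g t) + (B' * ccf g t + B t * (th t * ddf g t))) *\<^sub>R Xm + C' *\<^sub>R Ym
     + (A' * ccf g t + A t * (th t * ddf g t) - (B' * ddf g t + B t * - (th t * ccf g t))) *\<^sub>R Zm) (at t within S)"
    unfolding Mb_def MB_pauli
    by (rule derivative_eq_intros A B C cd dd refl | simp)+ (simp add: mult_ac)
  from d[unfolded eq] show ?thesis .
qed

end

lemma Mb_add: "Mb g t a b c + Mb g t a' b' c' = Mb g t (a + a') (b + b') (c + c')"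
  using Mb_lin[of g t a b c 1 a' b' c'] by simp

context sysl begin

definition rr where
  "rr \<sigma> \<epsilon> t s' = Mb g t (fst (psol \<sigma> \<epsilon> s' t)) (Re (snd (psol \<sigma> \<epsilon> s' t))) (Im (snd (psol \<sigma> \<epsilon> s' t)))"

lemma a_Mb2: "a_coef \<gamma> g \<sigma> t s' = Mb g t (al1 \<sigma> s' t) (Re (z1 \<sigma> t)) (Im (z1 \<sigma> t))"
proof -
  have jj_eq: "jj = (\<lambda>\<tau>. \<gamma> \<tau> / ((1 + (\<gamma> \<tau>)\<^sup>2) * es g \<tau> ^ 5))" by (simp add: fun_eq_iff jj_def E_def)
  show ?thesis using a_Mb[OF g_pos] by (simp add: al1_def JJ_def jj_eq z1_Re z1_Im)
qed

lemma rho_eq: "Ps g \<sigma> t + \<epsilon> *\<^sub>R a_coef \<gamma> g \<sigma> t s' + \<epsilon>\<^sup>2 *\<^sub>R rr \<sigma> \<epsilon> t s'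
  = cscale (1/2) (mat 1) + Mb g t (\<sigma>/2 + \<epsilon> * al1 \<sigma> s' t + \<epsilon>\<^sup>2 * fst (psol \<sigma> \<epsilon> s' t))
      (\<epsilon> * Re (z1 \<sigma> t) + \<epsilon>\<^sup>2 * Re (snd (psol \<sigma> \<epsilon> s' t))) (\<epsilon> * Im (z1 \<sigma> t) + \<epsilon>\<^sup>2 * Im (snd (psol \<sigma> \<epsilon> s' t)))"
  by (simp add: Ps_Mb a_Mb2 rr_def add.assoc Mb_scale Mb_add)

lemma hrd_fst: "(f has_vector_derivative f') F \<Longrightarrow> ((\<lambda>t. fst (f t)) has_real_derivative fst f') F"
  for f :: "real \<Rightarrow> real \<times> complex"
  using bounded_linear.has_vector_derivative[OF bounded_linear_fst] by (simp add: has_real_derivative_iff_has_vector_derivative)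
lemma hvd_snd: "(f has_vector_derivative f') F \<Longrightarrow> ((\<lambda>t. snd (f t)) has_vector_derivative snd f') F"
  for f :: "real \<Rightarrow> real \<times> complex"
  using bounded_linear.has_vector_derivative[OF bounded_linear_snd] by blast
lemma hrd_Re: "(f has_vector_derivative f') F \<Longrightarrow> ((\<lambda>t. Re (f t)) has_real_derivative Re f') F"
  for f :: "real \<Rightarrow> complex"
  using bounded_linear.has_vector_derivative[OF bounded_linear_Re] by (simp add: has_real_derivative_iff_has_vector_derivative)
lemma hrd_Im: "(f has_vector_derivative f') F \<Longrightarrow> ((\<lambda>t. Im (f t)) has_real_derivative Im f') F"
  for f :: "real \<Rightarrow> complex"
  using bounded_linear.has_vector_derivative[OF bounded_linear_Im] by (simp add: has_real_derivative_iff_has_vector_derivative)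

lemma ode_claim: assumes e: "\<epsilon> > 0" and s: "s' \<le> s"
  shows "\<exists>D. ((\<lambda>t. Ps g \<sigma> t + \<epsilon> *\<^sub>R a_coef \<gamma> g \<sigma> t s' + \<epsilon>\<^sup>2 *\<^sub>R rr \<sigma> \<epsilon> t s') has_vector_derivative D) (at s within {s'..})
     \<and> \<epsilon> *\<^sub>R D = Ls \<gamma> g s (Ps g \<sigma> s + \<epsilon> *\<^sub>R a_coef \<gamma> g \<sigma> s s' + \<epsilon>\<^sup>2 *\<^sub>R rr \<sigma> \<epsilon> s s')"
proof -
  define p where "p = psol \<sigma> \<epsilon> s'"
  have pd: "(p has_vector_derivative FF \<sigma> \<epsilon> s' s (p s)) (at s within {s'..})"
    using psol_ok[OF e, of \<sigma> s'] s unfolding odesol_def p_def by auto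
  define Fs where "Fs = FF \<sigma> \<epsilon> s' s (p s)"
  have dx: "((\<lambda>t. fst (p t)) has_real_derivative fst Fs) (at s within {s'..})"
    using hrd_fst[OF pd] by (simp add: Fs_def)
  have dRe: "((\<lambda>t. Re (snd (p t))) has_real_derivative Re (snd Fs)) (at s within {s'..})"
    using hrd_Re[OF hvd_snd[OF pd]] by (simp add: Fs_def)
  have dIm: "((\<lambda>t. Im (snd (p t))) has_real_derivative Im (snd Fs)) (at s within {s'..})"
    using hrd_Im[OF hvd_snd[OF pd]] by (simp add: Fs_def)
  have dz1Re: "((\<lambda>t. Re (z1 \<sigma> t)) has_real_derivative Re (z1d \<sigma> s)) (at s within {s'..})"
    by (rule hrd_Re[OF z1_deriv])
  have dz1Im: "((\<lambda>t. Im (z1 \<sigma> t)) has_real_derivative Im (z1d \<sigma> s)) (at s within {s'..})"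
    by (rule hrd_Im[OF z1_deriv])
  define A where "A t = \<sigma>/2 + \<epsilon> * al1 \<sigma> s' t + \<epsilon>\<^sup>2 * fst (p t)" for t
  define B where "B t = \<epsilon> * Re (z1 \<sigma> t) + \<epsilon>\<^sup>2 * Re (snd (p t))" for t
  define C where "C t = \<epsilon> * Im (z1 \<sigma> t) + \<epsilon>\<^sup>2 * Im (snd (p t))" for t
  define A' where "A' = \<epsilon> * (- (th s * Re (z1 \<sigma> s))) + \<epsilon>\<^sup>2 * fst Fs"
  define B' where "B' = \<epsilon> * Re (z1d \<sigma> s) + \<epsilon>\<^sup>2 * Re (snd Fs)"
  define C' where "C' = \<epsilon> * Im (z1d \<sigma> s) + \<epsilon>\<^sup>2 * Im (snd Fs)"
  have dA: "(A has_real_derivative A') (at s within {s'..})"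
    unfolding A_def[abs_def] A'_def by (auto intro!: derivative_eq_intros al1_deriv s dx)
  have dB: "(B has_real_derivative B') (at s within {s'..})"
    unfolding B_def[abs_def] B'_def by (intro DERIV_add DERIV_cmult dz1Re dRe)
  have dC: "(C has_real_derivative C') (at s within {s'..})"
    unfolding C_def[abs_def] C'_def by (intro DERIV_add DERIV_cmult dz1Im dIm)
  have rho: "(\<lambda>t. Ps g \<sigma> t + \<epsilon> *\<^sub>R a_coef \<gamma> g \<sigma> t s' + \<epsilon>\<^sup>2 *\<^sub>R rr \<sigma> \<epsilon> t s') = (\<lambda>t. cscale (1/2) (mat 1) + Mb g t (A t) (B t) (C t))"
    by (simp add: fun_eq_iff rho_eq A_def B_def C_def p_def)
  define D where "D = Mb g s (A' + th s * B s) (B' - th s * A s) C'"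
  have dD: "((\<lambda>t. cscale (1/2) (mat 1) + Mb g t (A t) (B t) (C t)) has_vector_derivative D) (at s within {s'..})"
    unfolding D_def using Mb_deriv[OF dA dB dC] by (auto intro!: derivative_eq_intros)
  have bal: "Re (of_real (th s * (\<sigma>/2)) + of_real (2 * E s) * (\<i> - of_real (\<gamma> s)) * z1 \<sigma> s) = 0"
            "Im (of_real (th s * (\<sigma>/2)) + of_real (2 * E s) * (\<i> - of_real (\<gamma> s)) * z1 \<sigma> s) = 0"
    using z1_bal[of s \<sigma>] by simp_all
  have eqs: "\<epsilon> * (A' + th s * B s) = 0" "\<epsilon> * (B' - th s * A s) = - 2 * es g s * C s - 2 * \<gamma> s * es g s * B s"
      "\<epsilon> * C' = 2 * es g s * B s - 2 * \<gamma> s * es g s * C s"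
    using bal e
    by (simp_all add: A_def B_def C_def A'_def B'_def C'_def Fs_def FF_def E_def field_simps power2_eq_square) auto
  have "\<epsilon> *\<^sub>R D = Ls \<gamma> g s (Ps g \<sigma> s + \<epsilon> *\<^sub>R a_coef \<gamma> g \<sigma> s s' + \<epsilon>\<^sup>2 *\<^sub>R rr \<sigma> \<epsilon> s s')"
    unfolding rho[THEN fun_cong[of _ _ s]] Ls_Mb[OF g_pos] D_def Mb_scale eqs by simp
  then show ?thesis using dD rho by auto
qed
end

lemma cm_norm_le: "norm (A::cmat) \<le> cmod (A$1$1) + cmod (A$1$2) + cmod (A$2$1) + cmod (A$2$2)"
proof -
  have r: "norm (v::complex^2) \<le> cmod (v$1) + cmod (v$2)" for v
    unfolding norm_vec_def by (rule order_trans[OF L2_set_le_sum]) (auto simp: UNIV_2)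
  have "norm A \<le> norm (A$1) + norm (A$2)"
    unfolding norm_vec_def by (rule order_trans[OF L2_set_le_sum]) (auto simp: UNIV_2)
  also have "\<dots> \<le> (cmod (A$1$1) + cmod (A$1$2)) + (cmod (A$2$1) + cmod (A$2$2))" by (intro add_mono r)
  finally show ?thesis by simp
qed

lemma compact_norm_bound:
  fixes f :: "'a::topological_space \<Rightarrow> 'b::real_normed_vector"
  assumes "compact K" "continuous_on K f" shows "\<exists>C. \<forall>x\<in>K. norm (f x) \<le> C"
proof -
  have "bounded (f ` K)" by (intro compact_imp_bounded compact_continuous_image assms)
  then show ?thesis by (auto simp: bounded_iff)
qed

context sysl begin

lemma Mb_norm: "norm (Mb g t a b c) \<le> 4 * (\<bar>a\<bar> + \<bar>b\<bar> + \<bar>c\<bar>)"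
proof -
  have sq: "(ccf g t)^2 \<le> 1" "(ddf g t)^2 \<le> 1" using cc_dd_sq[OF g_pos, of t] by (smt (verit) zero_le_power2)+
  have cd: "\<bar>ccf g t\<bar> \<le> 1" "\<bar>ddf g t\<bar> \<le> 1" using sq by (simp_all add: abs_square_le_1)
  have m: "\<bar>x * y\<bar> \<le> \<bar>x\<bar>" if "\<bar>y\<bar> \<le> 1" for x y :: real
    using that by (simp add: abs_mult mult_left_le)
  define V1 where "V1 = a * ddf g t + b * ccf g t"
  define V3 where "V3 = a * ccf g t - b * ddf g t"
  have v1: "\<bar>V1\<bar> \<le> \<bar>a\<bar> + \<bar>b\<bar>" unfolding V1_def using m[OF cd(2), of a] m[OF cd(1), of b] by linarith
  have v3: "\<bar>V3\<bar> \<le> \<bar>a\<bar> + \<bar>b\<bar>" unfolding V3_def using m[OF cd(1), of a] m[OF cd(2), of b] by linarith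
  have e1: "cmod (of_real V1 - \<i> * of_real c) \<le> \<bar>V1\<bar> + \<bar>c\<bar>"
    using norm_triangle_ineq4[of "of_real V1" "\<i> * of_real c"] by (simp add: norm_mult)
  have e2: "cmod (of_real V1 + \<i> * of_real c) \<le> \<bar>V1\<bar> + \<bar>c\<bar>"
    using norm_triangle_ineq[of "of_real V1" "\<i> * of_real c"] by (simp add: norm_mult)
  have ent: "Mb g t a b c $1$1 = of_real V3" "Mb g t a b c $1$2 = of_real V1 - \<i> * of_real c"
     "Mb g t a b c $2$1 = of_real V1 + \<i> * of_real c" "Mb g t a b c $2$2 = - of_real V3"
    by (simp_all add: Mb_def MB_def V1_def V3_def)
  have "norm (Mb g t a b c) \<le> \<bar>V3\<bar> + cmod (of_real V1 - \<i> * of_real c) + cmod (of_real V1 + \<i> * of_real c) + \<bar>V3\<bar>"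
    using cm_norm_le[of "Mb g t a b c"] unfolding ent by simp
  then show ?thesis using e1 e2 v1 v3 abs_ge_zero[of c] by (smt (verit))
qed

lemma int_w2: assumes "s' \<le> t" shows "integral {s'..t} (\<lambda>\<tau>. w \<tau> ^ 2) \<le> 4 * pi / g"
proof -
  define F where "F \<tau> = 4 / g * arctan (\<tau> / g)" for \<tau>
  have "((\<lambda>\<tau>. w \<tau> ^ 2) has_integral (F t - F s')) {s'..t}"
  proof (rule fundamental_theorem_of_calculus[OF assms])
    fix x assume "x \<in> {s'..t}"
    have "(F has_real_derivative 4 / g * (inverse (1 + (x / g)^2) * (1 / g))) (at x)"
      unfolding F_def[abs_def] using g_pos by (auto intro!: derivative_eq_intros)
    moreover have "4 / g * (inverse (1 + (x / g)^2) * (1 / g)) = w x ^ 2"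
      unfolding w_sq using g_pos by (simp add: field_simps power2_eq_square)
    ultimately have "(F has_real_derivative w x ^ 2) (at x)" by simp
    then show "(F has_vector_derivative w x ^ 2) (at x within {s'..t})"
      by (simp add: has_real_derivative_iff_has_vector_derivative has_vector_derivative_at_within)
  qed
  then have "integral {s'..t} (\<lambda>\<tau>. w \<tau> ^ 2) = F t - F s'" by (rule integral_unique)
  also have "\<dots> \<le> 4 / g * (pi/2) - 4 / g * (- (pi/2))"
    using g_pos arctan_ubound[of "t/g"] arctan_lbound[of "s'/g"] unfolding F_def
    by (intro diff_mono mult_left_mono) auto
  finally show ?thesis by simp
qed

lemma int_le_w2:
  assumes "s' \<le> t" "continuous_on {s'..t} f" "\<And>\<tau>. \<tau> \<in> {s'..t} \<Longrightarrow> f \<tau> \<le> C * w \<tau> ^ 2" "C \<ge> 0"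
  shows "integral {s'..t} f \<le> C * (4 * pi / g)"
proof -
  have wi: "(\<lambda>\<tau>. w \<tau> ^ 2) integrable_on {s'..t}"
    by (intro integrable_continuous_real continuous_intros continuous_on_subset[OF w_cont]) auto
  have "integral {s'..t} f \<le> integral {s'..t} (\<lambda>\<tau>. C * w \<tau> ^ 2)"
    by (intro integral_le integrable_continuous_real assms integrable_on_mult_right wi) auto
  also have "\<dots> = C * integral {s'..t} (\<lambda>\<tau>. w \<tau> ^ 2)" by (simp add: wi)
  also have "\<dots> \<le> C * (4 * pi / g)" by (intro mult_left_mono int_w2 assms)
  finally show ?thesis .
qed

definition Jb where "Jb = 4 / g^3 * (4 * pi / g)"

lemma jj_nn: "0 \<le> jj t" using gnn[of t] E_pos[of t] by (simp add: jj_def add_pos_nonneg)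
lemma jj_le: "jj t \<le> 4 / g^3 * w t ^ 2"
proof -
  have w3: "w t ^ 3 \<le> (2/g)^3" using w_le[of t] w_pos[of t] by (intro power_mono) auto
  have "jj t = jt t * (w t ^ 3 * w t ^ 2)" by (simp add: jj_jt power_add[symmetric])
  also have "\<dots> \<le> 1/2 * ((2/g)^3 * w t ^ 2)"
    using jt_bnd[of t] w3 w_pos[of t] g_pos by (intro mult_mono) auto
  also have "\<dots> = 4 / g^3 * w t ^ 2" by (simp add: power_divide)
  finally show ?thesis .
qed
lemma JJ_bnd: assumes "s' \<le> t" shows "0 \<le> JJ s' t \<and> JJ s' t \<le> Jb"
proof
  have jc: "continuous_on {s'..t} jj" by (rule continuous_on_subset[OF jj_cont]) auto
  show "0 \<le> JJ s' t" unfolding JJ_def by (intro integral_nonneg integrable_continuous_real jc jj_nn)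
  show "JJ s' t \<le> Jb" unfolding JJ_def Jb_def using g_pos by (intro int_le_w2 assms jc jj_le) auto
qed

end

context sysl begin

definition Xv :: "real \<Rightarrow> real \<Rightarrow> complex \<times> real \<times> real \<times> real \<times> real \<times> real \<times> real" where
  "Xv s' t = (uu t, \<gamma>1 t, \<gamma>2 t, t * w t, w t, JJ s' t, jt t)"
definition Psq :: "real \<Rightarrow> complex \<times> real \<times> real \<times> real \<times> real \<times> real \<times> real \<Rightarrow> complex" where
  "Psq \<sigma> x = of_real (\<sigma>*g/32) * (of_real ((fst (snd x)) * (fst (snd (snd (snd (snd x)))))^2) * (fst x)*(fst x)*(fst x) + of_real (3/4 * (fst (snd (snd (snd x)))) * (fst (snd (snd (snd (snd x)))))^3) * (fst x)*(fst x) - of_real (g^2/16 * (fst (snd (snd (snd (snd x))))) * (fst (snd (snd (snd (snd (snd x))))))) * (fst x))"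
definition Psd :: "real \<Rightarrow> complex \<times> real \<times> real \<times> real \<times> real \<times> real \<times> real \<Rightarrow> complex" where
  "Psd \<sigma> x = of_real (\<sigma>*g/32) * (of_real ((fst (snd (snd x))) * (fst (snd (snd (snd (snd x)))))^2) * (fst x)*(fst x)*(fst x) - of_real (3 * (fst (snd x))^2 * (fst (snd (snd (snd (snd x)))))^2) * (fst x)*(fst x)*(fst x)*(fst x) - of_real ((fst (snd (snd (snd x)))) * (fst (snd x)) * (fst (snd (snd (snd (snd x)))))^3) * (fst x)*(fst x)*(fst x) + of_real (3/4 * (fst (snd (snd (snd (snd x)))))^4) * (fst x)*(fst x) - of_real (3/2 * (fst (snd (snd (snd x)))) * (fst (snd x)) * (fst (snd (snd (snd (snd x)))))^3) * (fst x)*(fst x)*(fst x) - of_real (9/8 * (fst (snd (snd (snd x))))^2 * (fst (snd (snd (snd (snd x)))))^4) * (fst x)*(fst x) + of_real (g^2/16 * (fst (snd x)) * (fst (snd (snd (snd (snd x))))) * (fst (snd (snd (snd (snd (snd x))))))) * (fst x)*(fst x) + of_real (3*g^2/64 * (fst (snd (snd (snd x)))) * (fst (snd (snd (snd (snd x)))))^2 * (fst (snd (snd (snd (snd (snd x))))))) * (fst x) - of_real (g^2/16 * (fst (snd (snd (snd (snd x)))))^6 * (snd (snd (snd (snd (snd (snd x))))))) * (fst x))"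

lemma qq_Psq: "qq \<sigma> s' t = of_real (w t ^ 2) * Psq \<sigma> (Xv s' t)"
  by (simp add: qq_def Psq_def Xv_def algebra_simps eval_nat_numeral)
lemma qd_Psd: "qd \<sigma> s' t = of_real (w t ^ 2) * Psd \<sigma> (Xv s' t)"
  by (simp add: qd_def Psd_def Xv_def jj_jt algebra_simps eval_nat_numeral)

lemma q_bounds: "\<exists>C\<ge>0. \<forall>s' t. s' \<le> t \<longrightarrow> \<bar>\<gamma>1 t\<bar> \<le> B \<longrightarrow> \<bar>\<gamma>2 t\<bar> \<le> B \<longrightarrow>
    cmod (qq \<sigma> s' t) \<le> C * w t ^ 2 \<and> cmod (qd \<sigma> s' t) \<le> C * w t ^ 2"
proof -
  define K where "K = cball (0::complex) 1 \<times> {-B..B} \<times> {-B..B} \<times> {-2..2::real} \<times> {0..2/g} \<times> {0..Jb} \<times> {0..1/2::real}"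
  have cK: "compact K" unfolding K_def by (intro compact_Times compact_cball compact_Icc)
  have c1: "continuous_on K (Psq \<sigma>)" unfolding Psq_def by (intro continuous_intros)
  have c2: "continuous_on K (Psd \<sigma>)" unfolding Psd_def by (intro continuous_intros)
  obtain C1 where C1: "\<forall>x\<in>K. cmod (Psq \<sigma> x) \<le> C1" using compact_norm_bound[OF cK c1] by blast
  obtain C2 where C2: "\<forall>x\<in>K. cmod (Psd \<sigma> x) \<le> C2" using compact_norm_bound[OF cK c2] by blast
  show ?thesis
  proof (intro exI[of _ "max (max C1 C2) 0"] conjI allI impI)
    fix s' t assume st: "s' \<le> t" and b1: "\<bar>\<gamma>1 t\<bar> \<le> B" and b2: "\<bar>\<gamma>2 t\<bar> \<le> B"
    have XK: "Xv s' t \<in> K"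
      using uu_norm[of t] b1 b2 tw_le[of t] w_pos[of t] w_le[of t] JJ_bnd[OF st] jt_bnd[of t]
      by (auto simp: K_def Xv_def abs_le_iff)
    have w2: "0 \<le> w t ^ 2" by simp
    have b1: "cmod (Psq \<sigma> (Xv s' t)) \<le> max (max C1 C2) 0" using C1 XK by (meson max.coboundedI1)
    have b2: "cmod (Psd \<sigma> (Xv s' t)) \<le> max (max C1 C2) 0" using C2 XK by (meson max.coboundedI1 max.coboundedI2)
    show "cmod (qq \<sigma> s' t) \<le> max (max C1 C2) 0 * w t ^ 2"
      unfolding qq_Psq norm_mult norm_of_real using mult_left_mono[OF b1 w2] by (simp add: mult.commute)
    show "cmod (qd \<sigma> s' t) \<le> max (max C1 C2) 0 * w t ^ 2"
      unfolding qd_Psd norm_mult norm_of_real using mult_left_mono[OF b2 w2] by (simp add: mult.commute)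
  qed simp
qed

end

lemma energy_alg:
  fixes x th :: real and z3 q qd c :: complex
  assumes c: "Re c \<le> 0" and th: "th \<ge> 0"
  shows "x * (- (th * (Re z3 + Re q))) + (Re z3 * Re (c * z3 + of_real (th * x) - qd) + Im z3 * Im (c * z3 + of_real (th * x) - qd))
    \<le> sqrt (x\<^sup>2 + (Re z3)\<^sup>2 + (Im z3)\<^sup>2) * (th * cmod q + cmod qd)"
proof -
  define S where "S = sqrt (x\<^sup>2 + (Re z3)\<^sup>2 + (Im z3)\<^sup>2)"
  have eq: "x * (- (th * (Re z3 + Re q))) + (Re z3 * Re (c * z3 + of_real (th * x) - qd) + Im z3 * Im (c * z3 + of_real (th * x) - qd))
     = - (th * x * Re q) + Re c * ((Re z3)\<^sup>2 + (Im z3)\<^sup>2) - Re (cnj z3 * qd)"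
    by (simp add: algebra_simps power2_eq_square)
  have xS: "\<bar>x\<bar> \<le> S" unfolding S_def by (metis add.assoc le_add_same_cancel1 real_sqrt_abs real_sqrt_le_mono zero_le_power2 add_nonneg_nonneg)
  have zS: "cmod z3 \<le> S" unfolding S_def cmod_def by (intro real_sqrt_le_mono) simp
  have t1: "- (th * x * Re q) \<le> th * \<bar>x\<bar> * cmod q"
  proof -
    have "- (th * x * Re q) \<le> \<bar>th * x * Re q\<bar>" by simp
    also have "\<dots> = th * \<bar>x\<bar> * \<bar>Re q\<bar>" using th by (simp add: abs_mult)
    also have "\<dots> \<le> th * \<bar>x\<bar> * cmod q" using th by (intro mult_left_mono abs_Re_le_cmod) auto
    finally show ?thesis .
  qed
  have t2: "Re c * ((Re z3)\<^sup>2 + (Im z3)\<^sup>2) \<le> 0" using c by (simp add: mult_nonpos_nonneg)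
  have t3: "- Re (cnj z3 * qd) \<le> cmod z3 * cmod qd"
    using abs_Re_le_cmod[of "cnj z3 * qd"] by (simp add: norm_mult)
  have "th * \<bar>x\<bar> * cmod q \<le> th * S * cmod q" using th xS by (intro mult_right_mono mult_left_mono) auto
  moreover have "cmod z3 * cmod qd \<le> S * cmod qd" using zS by (intro mult_right_mono) auto
  moreover have "S * (th * cmod q + cmod qd) = th * S * cmod q + S * cmod qd" by (simp add: algebra_simps)
  ultimately show ?thesis unfolding eq S_def[symmetric] using t1 t2 t3 by linarith
qed

context sysl begin

lemma qq_cont: "continuous_on {s'..} (qq \<sigma> s')"
  using qq_deriv by (auto intro!: continuous_on_vector_derivative)
lemma g2_cont: "continuous_on UNIV \<gamma>2" by (rule c2)
lemma qd_cont: "continuous_on {s'..} (qd \<sigma> s')"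
  unfolding qd_def by (intro continuous_intros continuous_on_subset[OF uu_cont] continuous_on_subset[OF w_cont]
      continuous_on_subset[OF g1_cont] continuous_on_subset[OF g2_cont] continuous_on_subset[OF jj_cont] JJ_cont subset_UNIV)

lemma energy: assumes e: "\<epsilon> > 0" and st: "s' \<le> s"
  shows "sqrt (1 + (fst (psol \<sigma> \<epsilon> s' s))\<^sup>2 + (cmod (snd (psol \<sigma> \<epsilon> s' s) - qq \<sigma> s' s))\<^sup>2)
     \<le> 1 + integral {s'..s} (\<lambda>t. th t * cmod (qq \<sigma> s' t) + cmod (qd \<sigma> s' t))"
proof -
  define p where "p = psol \<sigma> \<epsilon> s'"
  have ok0: "p s' = (0, qq \<sigma> s' s')" using psol_ok[OF e, of \<sigma> s'] unfolding odesol_def p_def by auto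
  have ok: "(p has_vector_derivative FF \<sigma> \<epsilon> s' t (p t)) (at t within {s'..})" if "s' \<le> t" for t
    using psol_ok[OF e, of \<sigma> s'] that unfolding odesol_def p_def by auto
  define h where "h t = th t * cmod (qq \<sigma> s' t) + cmod (qd \<sigma> s' t)" for t
  have hc: "continuous_on {s'..} h" unfolding h_def
    by (intro continuous_intros continuous_on_subset[OF th_cont] qq_cont qd_cont subset_UNIV)
  have hnn: "0 \<le> h t" for t unfolding h_def using th_nn[of t] by simp
  define X where "X t = fst (p t)" for t
  define Z where "Z t = snd (p t) - qq \<sigma> s' t" for t
  define R where "R t = Re (Z t)" for t
  define I where "I t = Im (Z t)" for t
  define \<Phi> where "\<Phi> t = 1 + (X t)\<^sup>2 + (R t)\<^sup>2 + (I t)\<^sup>2" for t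
  define G where "G t = sqrt (\<Phi> t) - integral {s'..t} h" for t
  have \<Phi>pos: "\<Phi> t > 0" for t unfolding \<Phi>_def by (simp add: add_pos_nonneg)
  define c where "c t = of_real (2 * E t / \<epsilon>) * (\<i> - of_real (\<gamma> t))" for t
  have cRe: "Re (c t) \<le> 0" for t using E_pos[of t] gnn[of t] e by (simp add: c_def)
  have dG: "\<exists>y. (G has_real_derivative y) (at t within {s'..}) \<and> y \<le> 0" if t: "s' \<le> t" for t
  proof -
    define Ft where "Ft = FF \<sigma> \<epsilon> s' t (p t)"
    define Zd where "Zd = snd Ft - qd \<sigma> s' t"
    have dX: "(X has_real_derivative fst Ft) (at t within {s'..})"
      unfolding X_def[abs_def] Ft_def by (rule hrd_fst[OF ok[OF t]])
    have dZ: "(Z has_vector_derivative Zd) (at t within {s'..})"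
      unfolding Z_def[abs_def] Zd_def Ft_def by (intro derivative_intros hvd_snd ok qq_deriv t)
    define \<Phi>d where "\<Phi>d = 2 * X t * fst Ft + 2 * Re (Z t) * Re Zd + 2 * Im (Z t) * Im Zd"
    have dR: "(R has_real_derivative Re Zd) (at t within {s'..})"
      unfolding R_def[abs_def] by (rule hrd_Re[OF dZ])
    have dI': "(I has_real_derivative Im Zd) (at t within {s'..})"
      unfolding I_def[abs_def] by (rule hrd_Im[OF dZ])
    have d\<Phi>: "(\<Phi> has_real_derivative \<Phi>d) (at t within {s'..})"
      unfolding \<Phi>_def[abs_def] \<Phi>d_def R_def[symmetric] I_def[symmetric]
      by (auto intro!: derivative_eq_intros dX dR dI')
    have dI: "((\<lambda>t. integral {s'..t} h) has_real_derivative h t) (at t within {s'..})"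
      using int_deriv_ray[OF hc t] by (simp add: has_real_derivative_iff_has_vector_derivative)
    have dG: "(G has_real_derivative inverse (sqrt (\<Phi> t)) / 2 * \<Phi>d - h t) (at t within {s'..})"
      unfolding G_def[abs_def] using \<Phi>pos[of t]
      by (auto intro!: derivative_eq_intros d\<Phi> dI)
    have fst_eq: "fst Ft = - (th t * (Re (Z t) + Re (qq \<sigma> s' t)))"
      by (simp add: Ft_def FF_def Z_def)
    have cq: "c t * qq \<sigma> s' t = (z1d \<sigma> t - of_real (th t * al1 \<sigma> s' t)) / of_real \<epsilon>"
      using qq_rel[of t \<sigma> s'] e by (simp add: c_def field_simps)
    have Zd_eq: "Zd = c t * Z t + of_real (th t * X t) - qd \<sigma> s' t"
    proof -
      have "snd Ft = c t * snd (p t) + of_real (th t * X t) + (of_real (th t * al1 \<sigma> s' t) - z1d \<sigma> t) / of_real \<epsilon>"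
        by (simp add: Ft_def FF_def c_def X_def)
      also have "\<dots> = c t * Z t + of_real (th t * X t) + (c t * qq \<sigma> s' t + (of_real (th t * al1 \<sigma> s' t) - z1d \<sigma> t) / of_real \<epsilon>)"
        by (simp add: Z_def algebra_simps)
      also have "c t * qq \<sigma> s' t + (of_real (th t * al1 \<sigma> s' t) - z1d \<sigma> t) / of_real \<epsilon> = 0"
        unfolding cq by (simp add: diff_divide_distrib)
      finally show ?thesis by (simp add: Zd_def)
    qed
    define S where "S = sqrt ((X t)\<^sup>2 + (Re (Z t))\<^sup>2 + (Im (Z t))\<^sup>2)"
    have en: "\<Phi>d / 2 \<le> S * h t"
    proof -
      have "\<Phi>d / 2 = X t * (- (th t * (Re (Z t) + Re (qq \<sigma> s' t)))) + (Re (Z t) * Re (c t * Z t + of_real (th t * X t) - qd \<sigma> s' t) + Im (Z t) * Im (c t * Z t + of_real (th t * X t) - qd \<sigma> s' t))"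
        unfolding \<Phi>d_def fst_eq Zd_eq by (simp add: R_def I_def)
      also have "\<dots> \<le> S * h t" unfolding S_def h_def by (rule energy_alg[OF cRe th_nn])
      finally show ?thesis .
    qed
    have SN: "S \<le> sqrt (\<Phi> t)" unfolding S_def \<Phi>_def R_def I_def by (intro real_sqrt_le_mono) simp
    have "inverse (sqrt (\<Phi> t)) / 2 * \<Phi>d = inverse (sqrt (\<Phi> t)) * (\<Phi>d / 2)" by simp
    also have "\<dots> \<le> inverse (sqrt (\<Phi> t)) * (S * h t)"
      using \<Phi>pos[of t] en by (intro mult_left_mono) auto
    also have "\<dots> \<le> inverse (sqrt (\<Phi> t)) * (sqrt (\<Phi> t) * h t)"
      using \<Phi>pos[of t] SN hnn[of t] by (intro mult_left_mono mult_right_mono) auto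
    also have "\<dots> = h t" using \<Phi>pos[of t] by simp
    finally show ?thesis using dG by (intro exI[of _ "inverse (sqrt (\<Phi> t)) / 2 * \<Phi>d - h t"]) auto
  qed
  have Gc: "continuous_on {s'..s} G"
  proof -
    have "continuous_on {s'..} G"
      unfolding continuous_on_eq_continuous_within
    proof
      fix x assume "x \<in> {s'..}"
      then obtain y where "(G has_real_derivative y) (at x within {s'..})" using dG by auto
      then show "continuous (at x within {s'..}) G" by (rule DERIV_continuous)
    qed
    then show ?thesis by (rule continuous_on_subset) auto
  qed
  have "G s \<le> G s'"
  proof (rule DERIV_nonpos_imp_decreasing_open[OF st _ Gc])
    fix x assume x: "s' < x" "x < s"
    then obtain y where y: "(G has_real_derivative y) (at x within {s'..})" "y \<le> 0" using dG[of x] by auto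
    have "at x within {s'..} = at x" using x by (intro at_within_interior) auto
    then show "\<exists>y. (G has_real_derivative y) (at x) \<and> y \<le> 0" using y by auto
  qed
  moreover have "G s' = 1" using ok0 by (simp add: G_def \<Phi>_def X_def Z_def R_def I_def)
  moreover have "\<Phi> s = 1 + (fst (p s))\<^sup>2 + (cmod (snd (p s) - qq \<sigma> s' s))\<^sup>2"
    by (simp add: \<Phi>_def X_def Z_def R_def I_def cmod_power2)
  moreover have "h = (\<lambda>t. th t * cmod (qq \<sigma> s' t) + cmod (qd \<sigma> s' t))" by (simp add: fun_eq_iff h_def)
  ultimately show ?thesis by (simp add: G_def p_def)
qed
end

context sysl begin

lemma w2_le: "w t ^ 2 \<le> (2/g)^2" using w_le[of t] w_pos[of t] by (intro power_mono) auto

lemma rr_bound: "\<exists>C. \<forall>\<epsilon>>0. \<forall>s s'. s' \<le> s \<longrightarrow> (\<forall>\<tau>\<in>{s'..s}. \<bar>\<gamma>1 \<tau>\<bar> \<le> B \<and> \<bar>\<gamma>2 \<tau>\<bar> \<le> B) \<longrightarrow> norm (rr \<sigma> \<epsilon> s s') \<le> C"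
proof -
  obtain Cq where Cq0: "Cq \<ge> 0" and Cq: "\<And>s' t. s' \<le> t \<Longrightarrow> \<bar>\<gamma>1 t\<bar> \<le> B \<Longrightarrow> \<bar>\<gamma>2 t\<bar> \<le> B \<Longrightarrow>
      cmod (qq \<sigma> s' t) \<le> Cq * w t ^ 2 \<and> cmod (qd \<sigma> s' t) \<le> Cq * w t ^ 2"
    using q_bounds[of B \<sigma>] by blast
  define Ch where "Ch = g / 4 * (2/g)^2 * Cq + Cq"
  define Nb where "Nb = 1 + Ch * (4 * pi / g)"
  have Ch0: "Ch \<ge> 0" using g_pos Cq0 by (simp add: Ch_def)
  show ?thesis
  proof (intro exI[of _ "4 * (Nb + 2 * (Nb + Cq * (2/g)^2))"] allI impI)
    fix \<epsilon> s s' :: real assume e: "\<epsilon> > 0" and st: "s' \<le> s" and bd: "\<forall>\<tau>\<in>{s'..s}. \<bar>\<gamma>1 \<tau>\<bar> \<le> B \<and> \<bar>\<gamma>2 \<tau>\<bar> \<le> B"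
    define p where "p = psol \<sigma> \<epsilon> s'"
    define x where "x = fst (p s)"
    define z where "z = snd (p s)"
    define h where "h t = th t * cmod (qq \<sigma> s' t) + cmod (qd \<sigma> s' t)" for t
    have hc: "continuous_on {s'..s} h" unfolding h_def
      by (intro continuous_intros continuous_on_subset[OF th_cont] continuous_on_subset[OF qq_cont]
          continuous_on_subset[OF qd_cont]) auto
    have hb: "h \<tau> \<le> Ch * w \<tau> ^ 2" if "\<tau> \<in> {s'..s}" for \<tau>
    proof -
      have b: "cmod (qq \<sigma> s' \<tau>) \<le> Cq * w \<tau> ^ 2" "cmod (qd \<sigma> s' \<tau>) \<le> Cq * w \<tau> ^ 2"
        using Cq[of s' \<tau>] bd that by auto
      have "th \<tau> * cmod (qq \<sigma> s' \<tau>) \<le> (g / 4 * w \<tau> ^ 2) * (Cq * w \<tau> ^ 2)"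
        using b(1) th_nn[of \<tau>] by (simp add: th_w mult_left_mono)
      also have "\<dots> \<le> (g / 4 * (2/g)^2) * (Cq * w \<tau> ^ 2)"
        using w2_le[of \<tau>] g_pos Cq0 by (intro mult_right_mono mult_left_mono) auto
      finally show ?thesis using b(2) by (simp add: h_def Ch_def algebra_simps)
    qed
    have "sqrt (1 + x\<^sup>2 + (cmod (z - qq \<sigma> s' s))\<^sup>2) \<le> 1 + integral {s'..s} h"
      using energy[OF e st, of \<sigma>] by (simp add: x_def z_def p_def h_def[abs_def])
    also have "integral {s'..s} h \<le> Ch * (4 * pi / g)" by (rule int_le_w2[OF st hc hb Ch0])
    finally have N: "sqrt (1 + x\<^sup>2 + (cmod (z - qq \<sigma> s' s))\<^sup>2) \<le> Nb" by (simp add: Nb_def)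
    have xb: "\<bar>x\<bar> \<le> Nb"
      using N real_sqrt_le_mono[of "x\<^sup>2" "1 + x\<^sup>2 + (cmod (z - qq \<sigma> s' s))\<^sup>2"] by simp
    have zb: "cmod (z - qq \<sigma> s' s) \<le> Nb"
      using N real_sqrt_le_mono[of "(cmod (z - qq \<sigma> s' s))\<^sup>2" "1 + x\<^sup>2 + (cmod (z - qq \<sigma> s' s))\<^sup>2"] by simp
    have qb: "cmod (qq \<sigma> s' s) \<le> Cq * (2/g)^2"
      using Cq[of s' s] bd st w2_le[of s] Cq0 by (meson atLeastAtMost_iff mult_left_mono order.trans order_refl)
    have zz: "cmod z \<le> Nb + Cq * (2/g)^2"
      using norm_triangle_ineq[of "z - qq \<sigma> s' s" "qq \<sigma> s' s"] zb qb by simp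
    have "norm (rr \<sigma> \<epsilon> s s') \<le> 4 * (\<bar>x\<bar> + \<bar>Re z\<bar> + \<bar>Im z\<bar>)"
      unfolding rr_def using Mb_norm by (simp add: x_def z_def p_def)
    also have "\<dots> \<le> 4 * (Nb + 2 * (Nb + Cq * (2/g)^2))"
      using xb zz abs_Re_le_cmod[of z] abs_Im_le_cmod[of z] by simp
    finally show "norm (rr \<sigma> \<epsilon> s s') \<le> 4 * (Nb + 2 * (Nb + Cq * (2/g)^2))" .
  qed
qed

end

theorem lemma3p2:
  fixes g :: real and \<gamma> :: "real \<Rightarrow> real"
  assumes g_pos: "g > 0"
    and gamma_nonneg: "\<And>s. \<gamma> s \<ge> 0"
    and gamma_smooth: "smooth_fun \<gamma>"
  shows "\<forall>\<sigma>\<in>{1, -1::real}. \<exists>r :: real \<Rightarrow> real \<Rightarrow> real \<Rightarrow> cmat.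
     (\<forall>\<epsilon>>0. \<forall>s'. \<forall>s\<ge>s'. \<exists>D.
        ((\<lambda>t. Ps g \<sigma> t + \<epsilon> *\<^sub>R a_coef \<gamma> g \<sigma> t s' + \<epsilon>\<^sup>2 *\<^sub>R r \<epsilon> t s')
           has_vector_derivative D) (at s within {s'..})
        \<and> \<epsilon> *\<^sub>R D = Ls \<gamma> g s (Ps g \<sigma> s + \<epsilon> *\<^sub>R a_coef \<gamma> g \<sigma> s s' + \<epsilon>\<^sup>2 *\<^sub>R r \<epsilon> s s'))
   \<and> (\<forall>K. \<exists>C. \<forall>\<epsilon>>0. \<forall>s s'. \<bar>s\<bar> \<le> K \<and> \<bar>s'\<bar> \<le> K \<and> s' \<le> s \<longrightarrow> norm (r \<epsilon> s s') \<le> C)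
   \<and> ((bounded (range \<gamma>) \<and> bounded (range (deriv \<gamma>)) \<and> bounded (range (deriv (deriv \<gamma>)))
        \<and> continuous_on UNIV \<gamma> \<and> continuous_on UNIV (deriv \<gamma>) \<and> continuous_on UNIV (deriv (deriv \<gamma>)))
       \<longrightarrow> (\<exists>C. \<forall>\<epsilon>>0. \<forall>s s'. s' \<le> s \<longrightarrow> norm (r \<epsilon> s s') \<le> C))"
proof -
  have sm: "((deriv ^^ n) \<gamma>) differentiable (at x)" for n x
    using gamma_smooth unfolding smooth_fun_def by blast
  have d0: "(\<gamma> has_real_derivative deriv \<gamma> t) (at t)" for t
    using sm[of 0 t] by (simp add: DERIV_deriv_iff_real_differentiable)
  have d1: "(deriv \<gamma> has_real_derivative deriv (deriv \<gamma>) t) (at t)" for t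
    using sm[of 1 t] by (simp add: DERIV_deriv_iff_real_differentiable)
  have d2: "deriv (deriv \<gamma>) differentiable (at t)" for t
    using sm[of 2 t] by (simp add: numeral_2_eq_2)
  have c2: "continuous_on UNIV (deriv (deriv \<gamma>))"
    using d2 by (auto intro!: continuous_at_imp_continuous_on differentiable_imp_continuous_within)
  interpret S: sysl g \<gamma> "deriv \<gamma>" "deriv (deriv \<gamma>)"
    by unfold_locales (use g_pos gamma_nonneg d0 d1 c2 in auto)
  show ?thesis
  proof (intro ballI)
    fix \<sigma> :: real
    show "\<exists>r :: real \<Rightarrow> real \<Rightarrow> real \<Rightarrow> cmat.
     (\<forall>\<epsilon>>0. \<forall>s'. \<forall>s\<ge>s'. \<exists>D.
        ((\<lambda>t. Ps g \<sigma> t + \<epsilon> *\<^sub>R a_coef \<gamma> g \<sigma> t s' + \<epsilon>\<^sup>2 *\<^sub>R r \<epsilon> t s')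
           has_vector_derivative D) (at s within {s'..})
        \<and> \<epsilon> *\<^sub>R D = Ls \<gamma> g s (Ps g \<sigma> s + \<epsilon> *\<^sub>R a_coef \<gamma> g \<sigma> s s' + \<epsilon>\<^sup>2 *\<^sub>R r \<epsilon> s s'))
     \<and> (\<forall>K. \<exists>C. \<forall>\<epsilon>>0. \<forall>s s'. \<bar>s\<bar> \<le> K \<and> \<bar>s'\<bar> \<le> K \<and> s' \<le> s \<longrightarrow> norm (r \<epsilon> s s') \<le> C)
     \<and> ((bounded (range \<gamma>) \<and> bounded (range (deriv \<gamma>)) \<and> bounded (range (deriv (deriv \<gamma>)))
        \<and> continuous_on UNIV \<gamma> \<and> continuous_on UNIV (deriv \<gamma>) \<and> continuous_on UNIV (deriv (deriv \<gamma>)))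
       \<longrightarrow> (\<exists>C. \<forall>\<epsilon>>0. \<forall>s s'. s' \<le> s \<longrightarrow> norm (r \<epsilon> s s') \<le> C))"
    proof (intro exI[of _ "\<lambda>\<epsilon> t s'. S.rr \<sigma> \<epsilon> t s'"] conjI allI impI)
      fix \<epsilon> s' s :: real assume "\<epsilon> > 0" "s' \<le> s"
      then show "\<exists>D. ((\<lambda>t. Ps g \<sigma> t + \<epsilon> *\<^sub>R a_coef \<gamma> g \<sigma> t s' + \<epsilon>\<^sup>2 *\<^sub>R S.rr \<sigma> \<epsilon> t s')
           has_vector_derivative D) (at s within {s'..})
        \<and> \<epsilon> *\<^sub>R D = Ls \<gamma> g s (Ps g \<sigma> s + \<epsilon> *\<^sub>R a_coef \<gamma> g \<sigma> s s' + \<epsilon>\<^sup>2 *\<^sub>R S.rr \<sigma> \<epsilon> s s')"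
        by (rule S.ode_claim)
    next
      fix K :: real
      have cK: "compact {-K..K}" by simp
      obtain B1 where B1: "\<forall>x\<in>{-K..K}. norm (deriv \<gamma> x) \<le> B1"
        using compact_norm_bound[OF cK continuous_on_subset[OF S.g1_cont]] by blast
      obtain B2 where B2: "\<forall>x\<in>{-K..K}. norm (deriv (deriv \<gamma>) x) \<le> B2"
        using compact_norm_bound[OF cK continuous_on_subset[OF c2]] by blast
      obtain C where C: "\<forall>\<epsilon>>0. \<forall>s s'. s' \<le> s \<longrightarrow> (\<forall>\<tau>\<in>{s'..s}. \<bar>deriv \<gamma> \<tau>\<bar> \<le> max B1 B2 \<and> \<bar>deriv (deriv \<gamma>) \<tau>\<bar> \<le> max B1 B2) \<longrightarrow> norm (S.rr \<sigma> \<epsilon> s s') \<le> C"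
        using S.rr_bound[of "max B1 B2" \<sigma>] by blast
      show "\<exists>C. \<forall>\<epsilon>>0. \<forall>s s'. \<bar>s\<bar> \<le> K \<and> \<bar>s'\<bar> \<le> K \<and> s' \<le> s \<longrightarrow> norm (S.rr \<sigma> \<epsilon> s s') \<le> C"
      proof (intro exI[of _ C] allI impI)
        fix \<epsilon> s s' :: real assume e: "\<epsilon> > 0" and k: "\<bar>s\<bar> \<le> K \<and> \<bar>s'\<bar> \<le> K \<and> s' \<le> s"
        have "\<forall>\<tau>\<in>{s'..s}. \<bar>deriv \<gamma> \<tau>\<bar> \<le> max B1 B2 \<and> \<bar>deriv (deriv \<gamma>) \<tau>\<bar> \<le> max B1 B2"
        proof
          fix \<tau> assume "\<tau> \<in> {s'..s}"
          then have "\<tau> \<in> {-K..K}" using k by auto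
          then show "\<bar>deriv \<gamma> \<tau>\<bar> \<le> max B1 B2 \<and> \<bar>deriv (deriv \<gamma>) \<tau>\<bar> \<le> max B1 B2"
            using B1 B2 by (auto simp: le_max_iff_disj)
        qed
        then show "norm (S.rr \<sigma> \<epsilon> s s') \<le> C" using C e k by blast
      qed
    next
      assume H: "bounded (range \<gamma>) \<and> bounded (range (deriv \<gamma>)) \<and> bounded (range (deriv (deriv \<gamma>)))
        \<and> continuous_on UNIV \<gamma> \<and> continuous_on UNIV (deriv \<gamma>) \<and> continuous_on UNIV (deriv (deriv \<gamma>))"
      obtain B1 where B1: "\<forall>x. norm (deriv \<gamma> x) \<le> B1" using H by (auto simp: bounded_iff)
      obtain B2 where B2: "\<forall>x. norm (deriv (deriv \<gamma>) x) \<le> B2" using H by (auto simp: bounded_iff)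
      obtain C where C: "\<forall>\<epsilon>>0. \<forall>s s'. s' \<le> s \<longrightarrow> (\<forall>\<tau>\<in>{s'..s}. \<bar>deriv \<gamma> \<tau>\<bar> \<le> max B1 B2 \<and> \<bar>deriv (deriv \<gamma>) \<tau>\<bar> \<le> max B1 B2) \<longrightarrow> norm (S.rr \<sigma> \<epsilon> s s') \<le> C"
        using S.rr_bound[of "max B1 B2" \<sigma>] by blast
      show "\<exists>C. \<forall>\<epsilon>>0. \<forall>s s'. s' \<le> s \<longrightarrow> norm (S.rr \<sigma> \<epsilon> s s') \<le> C"
      proof (intro exI[of _ C] allI impI)
        fix \<epsilon> s s' :: real assume e: "\<epsilon> > 0" and k: "s' \<le> s"
        have "\<forall>\<tau>\<in>{s'..s}. \<bar>deriv \<gamma> \<tau>\<bar> \<le> max B1 B2 \<and> \<bar>deriv (deriv \<gamma>) \<tau>\<bar> \<le> max B1 B2"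
          using B1 B2 by (auto simp: le_max_iff_disj)
        then show "norm (S.rr \<sigma> \<epsilon> s s') \<le> C" using C e k by blast
      qed
    qed
  qed
qed

end
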